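(* Let $((f_t),(g_t),(h_t))$ be a $W_{1,+}$-geodesic on $G$ with associated function $m$, and define $P_t(x)=\frac{1}{m(x)}\sum_{\gamma\in\mathrm{SE}\Gamma_{2,x}}C_\gamma(t)$ and $Q_t(x)=\frac{1}{m(x)}\sum_{\gamma\in\mathrm{SE}\Gamma_{1,x}}C_\gamma(t)$. Then for all $t$: (1) $f_t(x_0)=m(x_0)P_t(x_0)Q_t(x_0)$ for $x_0\in G$; (2) $g_t(x_0x_1)=m(x_0,x_1)P_t(x_0)Q_t(x_1)$ for $(x_0x_1)\in E(G)$; (3) $h_t(x_0x_1x_2)=m(x_0,x_1,x_2)P_t(x_0)Q_t(x_2)$ for $(x_0x_1x_2)\in T(G)$.
   Context: $G$ is a connected, locally finite graph with graph distance $d$; geodesics are paths of adjacent vertices $\gamma(0),\dots,\gamma(n)$ with $n=d(\gamma(0),\gamma(n))$, $e_0(\gamma)=\gamma(0)$, $e_1(\gamma)=\gamma(n)$. For finitely supported probability distributions $f_0,f_1$: $\Pi_1(f_0,f_1)$ = couplings minimizing $\sum d(x,y)\pi(x,y)$ (minimum $W_1$), $\mathcal{C}(f_0,f_1)=\{(x,y):\pi(x,y)>0$ for some $\pi\in\Pi_1\}$; $W_1$-orientation: adjacent $x,y$ get $x\to y$ iff some geodesic $\gamma$ with $(e_0(\gamma),e_1(\gamma))\in\mathcal{C}(f_0,f_1)$ has $\gamma(k)=x,\gamma(k+1)=y$. Oriented paths: $\gamma(i)\to\gamma(i+1)$; $x\le y$ iff an oriented path (possibly of length $0$) goes from $x$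 to $y$; $\gamma_i=\gamma(i)$. $E(G)=\{(xy):x\to y\}$, $T(G)$ triples $x_0\to x_1\to x_2$, $\mathcal{F}(x)=\{y:x\to y\}$, $\mathcal{E}(x)=\{y:y\to x\}$; $\nabla g(x_1)=\sum_{\mathcal{F}(x_1)}g(x_1x_2)-\sum_{\mathcal{E}(x_1)}g(x_0x_1)$, $\nabla h(x_1x_2)=\sum_{x_3\in\mathcal{F}(x_2)}h(x_1x_2x_3)-\sum_{x_0\in\mathcal{E}(x_1)}h(x_0x_1x_2)$. $W_{1,+}$-geodesic: a family $(f_t)_{t\in[0,1]}$ from $f_0$ to $f_1$ with $W_1(f_s,f_t)=|t-s|W_1(f_0,f_1)$, differentiable in $t$, with $g_t$ on $E(G)$, $h_t$ on $T(G)$, $\partial_tf_t=-\nabla g_t$, $\partial_tg_t=-\nabla h_t$, $g_t>0$, $f_t(x_1)h_t(x_0x_1x_2)=g_t(x_0x_1)g_t(x_1x_2)$. $C_\gamma(t)=f_t(\gamma_0)$ if $L(\gamma)=0$, $g_t(\gamma_0\gamma_1)$ if $L(\gamma)=1$, $\prod_{i=0}^{n-1}g_t(\gamma_i\gamma_{i+1})/\prod_{j=1}^{n-1}f_t(\gamma_j)$ if $n\ge2$. $\mathcal{A}=\{x:\mathcal{E}(x)=\emptyset\}$, $\mathcal{B}=\{x:\mathcal{F}(x)=\emptyset\}$; extremal oriented paths start in $\mathcal{A}$, end in $\mathcal{B}$; $\mathrm{SE}\Gamma_{1,x}$: oriented paths from a vertex of $\mathcal{A}$ to $x$; $\mathrm{SE}\Gamma_{2,x}$: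 oriented paths from $x$ to a vertex of $\mathcal{B}$. For $z_1\le\cdots\le z_p$, $m(z_1,\dots,z_p)=\sum_\gamma C_\gamma(0)$ over extremal oriented paths $\gamma$ with indices $k_1\le\dots\le k_p$, $\gamma(k_i)=z_i$ (for extremal $\gamma$, $C_\gamma(t)$ is independent of $t$). *)

theory Defs
  imports "HOL-Analysis.Analysis"
begin

text \<open>A graph is given by an adjacency relation on the vertex type (vertex set = UNIV).
Paths are nonempty vertex lists; a path gamma(0),...,gamma(n) is a list of length n+1.\<close>

definition walk :: "('v \<Rightarrow> 'v \<Rightarrow> bool) \<Rightarrow> 'v list \<Rightarrow> bool" where
  "walk adj \<gamma> \<longleftrightarrow> \<gamma> \<noteq> [] \<and> (\<forall>i. Suc i < length \<gamma> \<longrightarrow> adj (\<gamma> ! i) (\<gamma> ! Suc i))"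

definition conn_locfin_graph :: "('v \<Rightarrow> 'v \<Rightarrow> bool) \<Rightarrow> bool" where
  "conn_locfin_graph adj \<longleftrightarrow>
     (\<forall>x y. adj x y \<longrightarrow> adj y x) \<and> (\<forall>x. \<not> adj x x) \<and>
     (\<forall>x. finite {y. adj x y}) \<and>
     (\<forall>x y. \<exists>\<gamma>. walk adj \<gamma> \<and> hd \<gamma> = x \<and> last \<gamma> = y)"

definition gdist :: "('v \<Rightarrow> 'v \<Rightarrow> bool) \<Rightarrow> 'v \<Rightarrow> 'v \<Rightarrow> nat" where
  "gdist adj x y = (LEAST n. \<exists>\<gamma>. walk adj \<gamma> \<and> hd \<gamma> = x \<and> last \<gamma> = y \<and> length \<gamma> = Suc n)"

definition geodesic :: "('v \<Rightarrow> 'v \<Rightarrow> bool) \<Rightarrow> 'v list \<Rightarrow> bool" where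
  "geodesic adj \<gamma> \<longleftrightarrow> walk adj \<gamma> \<and> length \<gamma> = Suc (gdist adj (hd \<gamma>) (last \<gamma>))"

definition fs_prob :: "('v \<Rightarrow> real) \<Rightarrow> bool" where
  "fs_prob f \<longleftrightarrow> (\<forall>x. 0 \<le> f x) \<and> finite {x. f x \<noteq> 0} \<and> (\<Sum>x\<in>{x. f x \<noteq> 0}. f x) = 1"

definition coupling :: "('v \<Rightarrow> real) \<Rightarrow> ('v \<Rightarrow> real) \<Rightarrow> ('v \<Rightarrow> 'v \<Rightarrow> real) \<Rightarrow> bool" where
  "coupling f0 f1 \<pi> \<longleftrightarrow>
     (\<forall>x y. 0 \<le> \<pi> x y) \<and> (\<forall>x y. \<pi> x y \<noteq> 0 \<longrightarrow> f0 x \<noteq> 0 \<and> f1 y \<noteq> 0) \<and>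
     (\<forall>x. (\<Sum>y\<in>{y. f1 y \<noteq> 0}. \<pi> x y) = f0 x) \<and>
     (\<forall>y. (\<Sum>x\<in>{x. f0 x \<noteq> 0}. \<pi> x y) = f1 y)"

definition tcost :: "('v \<Rightarrow> 'v \<Rightarrow> bool) \<Rightarrow> ('v \<Rightarrow> real) \<Rightarrow> ('v \<Rightarrow> real) \<Rightarrow> ('v \<Rightarrow> 'v \<Rightarrow> real) \<Rightarrow> real" where
  "tcost adj f0 f1 \<pi> = (\<Sum>(x,y)\<in>{x. f0 x \<noteq> 0} \<times> {y. f1 y \<noteq> 0}. real (gdist adj x y) * \<pi> x y)"

definition W1 :: "('v \<Rightarrow> 'v \<Rightarrow> bool) \<Rightarrow> ('v \<Rightarrow> real) \<Rightarrow> ('v \<Rightarrow> real) \<Rightarrow> real" where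
  "W1 adj f0 f1 = Inf (tcost adj f0 f1 ` {\<pi>. coupling f0 f1 \<pi>})"

definition Pi1 :: "('v \<Rightarrow> 'v \<Rightarrow> bool) \<Rightarrow> ('v \<Rightarrow> real) \<Rightarrow> ('v \<Rightarrow> real) \<Rightarrow> ('v \<Rightarrow> 'v \<Rightarrow> real) set" where
  "Pi1 adj f0 f1 = {\<pi>. coupling f0 f1 \<pi> \<and> tcost adj f0 f1 \<pi> = W1 adj f0 f1}"

definition Cset :: "('v \<Rightarrow> 'v \<Rightarrow> bool) \<Rightarrow> ('v \<Rightarrow> real) \<Rightarrow> ('v \<Rightarrow> real) \<Rightarrow> ('v \<times> 'v) set" where
  "Cset adj f0 f1 = {(x,y). \<exists>\<pi>\<in>Pi1 adj f0 f1. \<pi> x y > 0}"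

definition W1_arrow :: "('v \<Rightarrow> 'v \<Rightarrow> bool) \<Rightarrow> ('v \<Rightarrow> real) \<Rightarrow> ('v \<Rightarrow> real) \<Rightarrow> 'v \<Rightarrow> 'v \<Rightarrow> bool" where
  "W1_arrow adj f0 f1 x y \<longleftrightarrow> adj x y \<and>
     (\<exists>\<gamma> k. geodesic adj \<gamma> \<and> (hd \<gamma>, last \<gamma>) \<in> Cset adj f0 f1 \<and>
            Suc k < length \<gamma> \<and> \<gamma> ! k = x \<and> \<gamma> ! Suc k = y)"

definition opath :: "('v \<Rightarrow> 'v \<Rightarrow> bool) \<Rightarrow> 'v list \<Rightarrow> bool" where
  "opath ar \<gamma> \<longleftrightarrow> \<gamma> \<noteq> [] \<and> (\<forall>i. Suc i < length \<gamma> \<longrightarrow> ar (\<gamma> ! i) (\<gamma> ! Suc i))"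

definition Fset :: "('v \<Rightarrow> 'v \<Rightarrow> bool) \<Rightarrow> 'v \<Rightarrow> 'v set" where
  "Fset ar x = {y. ar x y}"

definition Eset :: "('v \<Rightarrow> 'v \<Rightarrow> bool) \<Rightarrow> 'v \<Rightarrow> 'v set" where
  "Eset ar x = {y. ar y x}"

definition Aset :: "('v \<Rightarrow> 'v \<Rightarrow> bool) \<Rightarrow> 'v set" where
  "Aset ar = {x. Eset ar x = {}}"

definition Bset :: "('v \<Rightarrow> 'v \<Rightarrow> bool) \<Rightarrow> 'v set" where
  "Bset ar = {x. Fset ar x = {}}"

definition extremal :: "('v \<Rightarrow> 'v \<Rightarrow> bool) \<Rightarrow> 'v list \<Rightarrow> bool" where
  "extremal ar \<gamma> \<longleftrightarrow> opath ar \<gamma> \<and> hd \<gamma> \<in> Aset ar \<and> last \<gamma> \<in> Bset ar"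

definition SE1 :: "('v \<Rightarrow> 'v \<Rightarrow> bool) \<Rightarrow> 'v \<Rightarrow> 'v list set" where
  "SE1 ar x = {\<gamma>. opath ar \<gamma> \<and> hd \<gamma> \<in> Aset ar \<and> last \<gamma> = x}"

definition SE2 :: "('v \<Rightarrow> 'v \<Rightarrow> bool) \<Rightarrow> 'v \<Rightarrow> 'v list set" where
  "SE2 ar x = {\<gamma>. opath ar \<gamma> \<and> hd \<gamma> = x \<and> last \<gamma> \<in> Bset ar}"

definition div_v :: "('v \<Rightarrow> 'v \<Rightarrow> bool) \<Rightarrow> ('v \<Rightarrow> 'v \<Rightarrow> real) \<Rightarrow> 'v \<Rightarrow> real" where
  "div_v ar g x1 = (\<Sum>x2\<in>Fset ar x1. g x1 x2) - (\<Sum>x0\<in>Eset ar x1. g x0 x1)"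

definition div_e :: "('v \<Rightarrow> 'v \<Rightarrow> bool) \<Rightarrow> ('v \<Rightarrow> 'v \<Rightarrow> 'v \<Rightarrow> real) \<Rightarrow> 'v \<Rightarrow> 'v \<Rightarrow> real" where
  "div_e ar h x1 x2 = (\<Sum>x3\<in>Fset ar x2. h x1 x2 x3) - (\<Sum>x0\<in>Eset ar x1. h x0 x1 x2)"

text \<open>C_gamma for given f_t, g_t; L(gamma) = length gamma - 1.\<close>
definition Cpath :: "('v \<Rightarrow> real) \<Rightarrow> ('v \<Rightarrow> 'v \<Rightarrow> real) \<Rightarrow> 'v list \<Rightarrow> real" where
  "Cpath f g \<gamma> =
     (if length \<gamma> = 1 then f (\<gamma> ! 0)
      else if length \<gamma> = 2 then g (\<gamma> ! 0) (\<gamma> ! 1)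
      else (\<Prod>i<length \<gamma> - 1. g (\<gamma> ! i) (\<gamma> ! Suc i)) / (\<Prod>j\<in>{1..<length \<gamma> - 1}. f (\<gamma> ! j)))"

definition mfun :: "('v \<Rightarrow> 'v \<Rightarrow> bool) \<Rightarrow> ('v \<Rightarrow> real) \<Rightarrow> ('v \<Rightarrow> 'v \<Rightarrow> real) \<Rightarrow> 'v list \<Rightarrow> real" where
  "mfun ar f0 g0 zs =
     (\<Sum>\<gamma>\<in>{\<gamma>. extremal ar \<gamma> \<and>
              (\<exists>ks. length ks = length zs \<and> sorted ks \<and>
                    (\<forall>i<length zs. ks ! i < length \<gamma> \<and> \<gamma> ! (ks ! i) = zs ! i))}.
        Cpath f0 g0 \<gamma>)"

definition W1plus_geodesic ::
  "('v \<Rightarrow> 'v \<Rightarrow> bool) \<Rightarrow> (real \<Rightarrow> 'v \<Rightarrow> real) \<Rightarrow> (real \<Rightarrow> 'v \<Rightarrow> 'v \<Rightarrow> real)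
    \<Rightarrow> (real \<Rightarrow> 'v \<Rightarrow> 'v \<Rightarrow> 'v \<Rightarrow> real) \<Rightarrow> bool" where
  "W1plus_geodesic adj f g h \<longleftrightarrow>
     (let ar = W1_arrow adj (f 0) (f 1) in
     (\<forall>t\<in>{0..1}. fs_prob (f t)) \<and>
     (\<forall>s\<in>{0..1}. \<forall>t\<in>{0..1}. W1 adj (f s) (f t) = \<bar>t - s\<bar> * W1 adj (f 0) (f 1)) \<and>
     (\<forall>t\<in>{0..1}. \<forall>x. ((\<lambda>\<tau>. f \<tau> x) has_real_derivative (- div_v ar (g t) x)) (at t within {0..1})) \<and>
     (\<forall>t\<in>{0..1}. \<forall>x y. ar x y \<longrightarrow>
        ((\<lambda>\<tau>. g \<tau> x y) has_real_derivative (- div_e ar (h t) x y)) (at t within {0..1})) \<and>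
     (\<forall>t\<in>{0..1}. \<forall>x y. ar x y \<longrightarrow> g t x y > 0) \<and>
     (\<forall>t\<in>{0..1}. \<forall>x0 x1 x2. ar x0 x1 \<and> ar x1 x2 \<longrightarrow>
        f t x1 * h t x0 x1 x2 = g t x0 x1 * g t x1 x2))"

end

theory Submission
  imports Defs "HOL-Analysis.Analysis"
begin

lemma walk_opath: "walk adj = opath adj"
  by (auto simp: fun_eq_iff walk_def opath_def)

lemma opath_Nil[simp]: "\<not> opath ar []" by (simp add: opath_def)
lemma opath_single[simp]: "opath ar [x]" by (simp add: opath_def)
lemma opath_Cons2[simp]: "opath ar (x # y # r) \<longleftrightarrow> ar x y \<and> opath ar (y # r)"
proof
  assume a: "opath ar (x # y # r)"
  have "ar x y" using a unfolding opath_def by (metis Suc_less_eq length_Cons nth_Cons_0 nth_Cons_Suc zero_less_Suc)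
  moreover have "opath ar (y # r)" using a unfolding opath_def
    by (metis Suc_less_eq length_Cons list.distinct(1) nth_Cons_Suc)
  ultimately show "ar x y \<and> opath ar (y # r)" by simp
next
  assume a: "ar x y \<and> opath ar (y # r)"
  show "opath ar (x # y # r)" unfolding opath_def
  proof (intro conjI allI impI)
    fix i assume "Suc i < length (x # y # r)"
    then show "ar ((x # y # r) ! i) ((x # y # r) ! Suc i)"
      using a unfolding opath_def by (cases i) auto
  qed simp
qed

lemma opath_append:
  "p \<noteq> [] \<Longrightarrow> q \<noteq> [] \<Longrightarrow> opath ar (p @ q) \<longleftrightarrow> opath ar p \<and> opath ar q \<and> ar (last p) (hd q)"
proof (induction p)
  case Nil then show ?case by simp
next
  case (Cons x p)
  show ?case
  proof (cases p)
    case Nil then show ?thesis using Cons by (cases q) auto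
  next
    case (Cons y r)
    then show ?thesis using Cons.IH Cons.prems by auto
  qed
qed

lemma opath_join:
  assumes "opath ar p" "opath ar q" "last p = hd q"
  shows "opath ar (p @ tl q)"
proof (cases "tl q")
  case Nil then show ?thesis using assms by simp
next
  case (Cons a list)
  have "q = hd q # tl q" using assms(2) by (cases q) auto
  then have "opath ar (hd q # tl q)" using assms by simp
  then have "ar (hd q) (hd (tl q))" "opath ar (tl q)" using Cons by auto
  moreover have "p \<noteq> []" using assms(1) by (cases p) auto
  ultimately show ?thesis using assms Cons opath_append[of p "tl q" ar] by auto
qed

lemma opath_take: "opath ar \<gamma> \<Longrightarrow> 0 < n \<Longrightarrow> opath ar (take n \<gamma>)"
  unfolding opath_def by auto

lemma opath_drop: "opath ar \<gamma> \<Longrightarrow> n < length \<gamma> \<Longrightarrow> opath ar (drop n \<gamma>)"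
  unfolding opath_def by auto

lemma opath_nth: "opath ar \<gamma> \<Longrightarrow> Suc i < length \<gamma> \<Longrightarrow> ar (\<gamma>!i) (\<gamma>!Suc i)"
  unfolding opath_def by auto

lemma opath_seg:
  assumes "opath ar \<gamma>" "i \<le> j" "j < length \<gamma>"
  shows "opath ar (drop i (take (Suc j) \<gamma>)) \<and> hd (drop i (take (Suc j) \<gamma>)) = \<gamma>!i
       \<and> last (drop i (take (Suc j) \<gamma>)) = \<gamma>!j \<and> length (drop i (take (Suc j) \<gamma>)) = Suc (j - i)"
proof -
  have "opath ar (take (Suc j) \<gamma>)" using opath_take assms by blast
  then have "opath ar (drop i (take (Suc j) \<gamma>))" using opath_drop assms by fastforce
  moreover have "hd (drop i (take (Suc j) \<gamma>)) = \<gamma>!i" using assms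
    by (simp add: hd_drop_conv_nth)
  moreover have "last (drop i (take (Suc j) \<gamma>)) = \<gamma>!j" using assms
    by (simp add: last_conv_nth)
  ultimately show ?thesis using assms by auto
qed

lemma last_take_Suc: "k < length \<gamma> \<Longrightarrow> last (take (Suc k) \<gamma>) = \<gamma>!k"
  by (simp add: take_Suc_conv_app_nth)

section \<open>graph distance\<close>

lemma gdist_le:
  assumes "walk adj w" "hd w = x" "last w = y"
  shows "gdist adj x y \<le> length w - 1"
proof -
  have "w \<noteq> []" using assms walk_def by auto
  then have "length w = Suc (length w - 1)" by simp
  then show ?thesis unfolding gdist_def using assms by (intro Least_le exI[of _ w]) simp
qed

lemma gdist_ex:
  assumes "conn_locfin_graph adj"
  shows "\<exists>w. walk adj w \<and> hd w = x \<and> last w = y \<and> length w = Suc (gdist adj x y)"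
proof -
  have "\<exists>w. walk adj w \<and> hd w = x \<and> last w = y" using assms unfolding conn_locfin_graph_def by metis
  then obtain w where w: "walk adj w" "hd w = x" "last w = y" by blast
  then have "w \<noteq> []" by (auto simp: walk_opath)
  then have "\<exists>n \<gamma>. walk adj \<gamma> \<and> hd \<gamma> = x \<and> last \<gamma> = y \<and> length \<gamma> = Suc n"
    using w by (intro exI[of _ "length w - 1"] exI[of _ w]) auto
  then show ?thesis unfolding gdist_def by (rule LeastI_ex)
qed

lemma gdist_refl[simp]: "gdist adj x x = 0"
  using gdist_le[of adj "[x]" x x] by (simp add: walk_opath)

lemma gdist_adj: "adj x y \<Longrightarrow> gdist adj x y \<le> 1"
  using gdist_le[of adj "[x,y]" x y] by (simp add: walk_opath)

lemma gdist_tri: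
  assumes "conn_locfin_graph adj"
  shows "gdist adj x z \<le> gdist adj x y + gdist adj y z"
proof -
  obtain w1 where w1: "walk adj w1" "hd w1 = x" "last w1 = y" "length w1 = Suc (gdist adj x y)"
    using gdist_ex[OF assms] by blast
  obtain w2 where w2: "walk adj w2" "hd w2 = y" "last w2 = z" "length w2 = Suc (gdist adj y z)"
    using gdist_ex[OF assms] by blast
  have "walk adj (w1 @ tl w2)" using opath_join[of adj w1 w2] w1 w2 by (simp add: walk_opath)
  moreover have "hd (w1 @ tl w2) = x" using w1 by (cases w1) auto
  moreover have "last (w1 @ tl w2) = z" using w1 w2
    by (cases w2) (auto simp: walk_opath)
  ultimately have "gdist adj x z \<le> length (w1 @ tl w2) - 1" by (rule gdist_le)
  then show ?thesis using w1 w2 by simp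
qed

lemma geodesic_split:
  assumes "geodesic adj \<gamma>" "Suc k < length \<gamma>"
  shows "gdist adj (hd \<gamma>) (\<gamma>!k) + 1 + gdist adj (\<gamma>!Suc k) (last \<gamma>) \<le> gdist adj (hd \<gamma>) (last \<gamma>)"
proof -
  have w: "opath adj \<gamma>" using assms geodesic_def walk_opath by metis
  have "gdist adj (hd \<gamma>) (\<gamma>!k) \<le> length (take (Suc k) \<gamma>) - 1"
    apply (rule gdist_le) using opath_take[OF w, of "Suc k"] assms
    by (auto simp: walk_opath hd_conv_nth last_take_Suc)
  moreover have "gdist adj (\<gamma>!Suc k) (last \<gamma>) \<le> length (drop (Suc k) \<gamma>) - 1"
    apply (rule gdist_le) using opath_drop[OF w] assms
    by (auto simp: walk_opath hd_drop_conv_nth)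
  ultimately show ?thesis using assms unfolding geodesic_def by auto
qed



fun ep :: "('v \<Rightarrow> 'v \<Rightarrow> real) \<Rightarrow> 'v list \<Rightarrow> real" where
  "ep G (x # y # r) = G x y * ep G (y # r)"
| "ep G _ = 1"

fun ip :: "('v \<Rightarrow> real) \<Rightarrow> 'v list \<Rightarrow> real" where
  "ip F (x # y # z # r) = F y * ip F (y # z # r)"
| "ip F _ = 1"

lemma ep_prod: "ep G \<gamma> = (\<Prod>i<length \<gamma> - 1. G (\<gamma>!i) (\<gamma>!Suc i))"
proof (induction G \<gamma> rule: ep.induct)
  case (1 G x y r)
  have "(\<Prod>i<length (x # y # r) - 1. G ((x # y # r)!i) ((x # y # r)!Suc i))
      = (\<Prod>i<Suc (length r). G ((x # y # r)!i) ((x # y # r)!Suc i))" by simp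
  also have "\<dots> = G x y * (\<Prod>i<length r. G ((y # r)!i) ((y # r)!Suc i))"
    by (subst prod.lessThan_Suc_shift) simp
  finally show ?case using 1 by simp
qed auto

lemma ip_prod: "ip F \<gamma> = (\<Prod>j<length \<gamma> - 2. F (\<gamma>!Suc j))"
proof (induction F \<gamma> rule: ip.induct)
  case (1 F x y z r)
  have "(\<Prod>j<length (x # y # z # r) - 2. F ((x # y # z # r)!Suc j))
      = (\<Prod>j<Suc (length r). F ((x # y # z # r)!Suc j))" by simp
  also have "\<dots> = F y * (\<Prod>j<length r. F ((y # z # r)!Suc j))"
    by (subst prod.lessThan_Suc_shift) simp
  finally show ?case using 1 by simp
qed auto

lemma prod_shift1: "m \<ge> 1 \<Longrightarrow> (\<Prod>j\<in>{1..<m}. h j) = (\<Prod>j<m - 1. h (Suc j :: nat)) "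
proof -
  assume "m \<ge> 1"
  then obtain k where "m = Suc k" by (cases m) auto
  then show ?thesis
    using prod.shift_bounds_Suc_ivl[of h 0 k] by (simp add: atLeast0LessThan)
qed

lemma Cpath_eq: "length \<gamma> \<ge> 2 \<Longrightarrow> Cpath F G \<gamma> = ep G \<gamma> / ip F \<gamma>"
proof -
  assume a: "length \<gamma> \<ge> 2"
  show ?thesis
  proof (cases "length \<gamma> = 2")
    case True
    then obtain x y where "\<gamma> = [x, y]"
      by (auto simp: numeral_2_eq_2 length_Suc_conv)
    then show ?thesis by (simp add: Cpath_def)
  next
    case False
    have "(\<Prod>j\<in>{1..<length \<gamma> - 1}. F (\<gamma>!j)) = (\<Prod>j<length \<gamma> - 1 - 1. F (\<gamma>!Suc j))"
      by (rule prod_shift1) (use a in simp)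
    also have "length \<gamma> - 1 - 1 = length \<gamma> - 2" by simp
    finally have "(\<Prod>j\<in>{1..<length \<gamma> - 1}. F (\<gamma>!j)) = ip F \<gamma>"
      by (simp add: ip_prod)
    then show ?thesis using a False by (simp add: Cpath_def ep_prod)
  qed
qed

lemma Cpath_single[simp]: "Cpath F G [x] = F x" by (simp add: Cpath_def)

lemma ep_Cons: "ep G (x # w) = (if w = [] then 1 else G x (hd w) * ep G w)"
  by (cases w) auto

lemma ip_Cons: "ip F (x # w) = (if length w \<ge> 2 then F (hd w) * ip F w else 1)"
proof (cases w)
  case (Cons y r) then show ?thesis by (cases r) auto
qed simp

lemma ep_app: "p \<noteq> [] \<Longrightarrow> ep G (p @ q') = ep G p * ep G (last p # q')"
  by (induction G p rule: ep.induct) auto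

lemma ep_join: "p \<noteq> [] \<Longrightarrow> q \<noteq> [] \<Longrightarrow> last p = hd q \<Longrightarrow> ep G (p @ tl q) = ep G p * ep G q"
proof -
  assume a: "p \<noteq> []" "q \<noteq> []" "last p = hd q"
  obtain c q' where q: "q = c # q'" using a(2) by (cases q) auto
  show ?thesis using ep_app[OF a(1), of G q'] q a(3) by simp
qed

lemma ip_app: "p \<noteq> [] \<Longrightarrow> ip F (p @ q') = ip F p * ip F (last p # q') * (if length p \<ge> 2 \<and> q' \<noteq> [] then F (last p) else 1)"
proof (induction F p rule: ip.induct)
  case (1 F x y z r) then show ?case by simp
next
  case ("2_3" F x y) then show ?case by (cases q') auto
qed auto

lemma ip_join: "p \<noteq> [] \<Longrightarrow> q \<noteq> [] \<Longrightarrow> last p = hd q \<Longrightarrow>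
   ip F (p @ tl q) = ip F p * ip F q * (if length p \<ge> 2 \<and> length q \<ge> 2 then F (hd q) else 1)"
proof -
  assume a: "p \<noteq> []" "q \<noteq> []" "last p = hd q"
  obtain c q' where q: "q = c # q'" using a(2) by (cases q) auto
  have "ip F (p @ q') = ip F p * ip F (last p # q') * (if length p \<ge> 2 \<and> q' \<noteq> [] then F (last p) else 1)"
    using a(1) by (rule ip_app)
  moreover have "(length q \<ge> 2) = (q' \<noteq> [])" using q by (cases q') auto
  ultimately show ?thesis using q a(3) by simp
qed

lemma ep_pos: "opath ar \<gamma> \<Longrightarrow> (\<And>x y. ar x y \<Longrightarrow> G x y > 0) \<Longrightarrow> ep G \<gamma> > 0"
  by (induction G \<gamma> rule: ep.induct) auto

lemma ip_pos: "opath ar \<gamma> \<Longrightarrow> (\<And>x y z. ar x y \<Longrightarrow> ar y z \<Longrightarrow> F y > 0) \<Longrightarrow> ip F \<gamma> > 0"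
  by (induction F \<gamma> rule: ip.induct) auto



fun lnC :: "('v \<Rightarrow> real) \<Rightarrow> ('v \<Rightarrow> 'v \<Rightarrow> real) \<Rightarrow> 'v list \<Rightarrow> real" where
  "lnC F G (x # y # z # r) = ln (G x y) - ln (F y) + lnC F G (y # z # r)"
| "lnC F G [x, y] = ln (G x y)"
| "lnC F G _ = 0"

locale geo =
  fixes ar :: "'v \<Rightarrow> 'v \<Rightarrow> bool" and f :: "real \<Rightarrow> 'v \<Rightarrow> real"
    and g :: "real \<Rightarrow> 'v \<Rightarrow> 'v \<Rightarrow> real" and h :: "real \<Rightarrow> 'v \<Rightarrow> 'v \<Rightarrow> 'v \<Rightarrow> real"
  assumes fnn: "\<And>t x. t \<in> {0..1} \<Longrightarrow> f t x \<ge> 0"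
    and fd: "\<And>t x. t \<in> {0..1} \<Longrightarrow> ((\<lambda>\<tau>. f \<tau> x) has_real_derivative (- div_v ar (g t) x)) (at t within {0..1})"
    and gd: "\<And>t x y. t \<in> {0..1} \<Longrightarrow> ar x y \<Longrightarrow>
              ((\<lambda>\<tau>. g \<tau> x y) has_real_derivative (- div_e ar (h t) x y)) (at t within {0..1})"
    and gpos: "\<And>t x y. t \<in> {0..1} \<Longrightarrow> ar x y \<Longrightarrow> g t x y > 0"
    and fh: "\<And>t x0 x1 x2. t \<in> {0..1} \<Longrightarrow> ar x0 x1 \<Longrightarrow> ar x1 x2 \<Longrightarrow>
              f t x1 * h t x0 x1 x2 = g t x0 x1 * g t x1 x2"
begin

lemma fpos: assumes "t \<in> {0..1}" "ar x y" "ar y z" shows "f t y > 0"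
proof -
  have "f t y * h t x y z > 0" using fh[OF assms] gpos assms by simp
  then have "f t y \<noteq> 0" by auto
  then show ?thesis using fnn[OF assms(1), of y] by simp
qed

definition In :: "real \<Rightarrow> 'v \<Rightarrow> real" where
  "In t x = (\<Sum>x0\<in>Eset ar x. g t x0 x) / f t x"
definition Out :: "real \<Rightarrow> 'v \<Rightarrow> real" where
  "Out t y = (\<Sum>x3\<in>Fset ar y. g t y x3) / f t y"

lemma edge_deriv:
  assumes t: "t \<in> {0..1}" and xy: "ar x y"
  shows "((\<lambda>\<tau>. ln (g \<tau> x y)) has_real_derivative (In t x - Out t y)) (at t within {0..1})"
proof -
  have gp: "g t x y > 0" using gpos t xy by simp
  have d: "((\<lambda>\<tau>. ln (g \<tau> x y)) has_real_derivative (1 / g t x y * (- div_e ar (h t) x y))) (at t within {0..1})"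
    by (rule DERIV_chain'[OF gd[OF t xy]]) (rule DERIV_ln_divide[OF gp])
  have e1: "(\<Sum>x0\<in>Eset ar x. h t x0 x y) / g t x y = In t x"
  proof -
    have "(\<Sum>x0\<in>Eset ar x. h t x0 x y) / g t x y = (\<Sum>x0\<in>Eset ar x. h t x0 x y / g t x y)"
      by (simp add: sum_divide_distrib)
    also have "\<dots> = (\<Sum>x0\<in>Eset ar x. g t x0 x / f t x)"
    proof (rule sum.cong)
      fix x0 assume "x0 \<in> Eset ar x"
      then have a: "ar x0 x" by (simp add: Eset_def)
      have fp: "f t x > 0" using fpos[OF t a xy] .
      have "f t x * h t x0 x y = g t x0 x * g t x y" using fh[OF t a xy] .
      then have "h t x0 x y = g t x0 x * g t x y / f t x" using fp by (simp add: field_simps)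
      then show "h t x0 x y / g t x y = g t x0 x / f t x" using gp by simp
    qed simp
    also have "\<dots> = In t x" by (simp add: In_def sum_divide_distrib)
    finally show ?thesis .
  qed
  have e2: "(\<Sum>x3\<in>Fset ar y. h t x y x3) / g t x y = Out t y"
  proof -
    have "(\<Sum>x3\<in>Fset ar y. h t x y x3) / g t x y = (\<Sum>x3\<in>Fset ar y. h t x y x3 / g t x y)"
      by (simp add: sum_divide_distrib)
    also have "\<dots> = (\<Sum>x3\<in>Fset ar y. g t y x3 / f t y)"
    proof (rule sum.cong)
      fix x3 assume "x3 \<in> Fset ar y"
      then have a: "ar y x3" by (simp add: Fset_def)
      have fp: "f t y > 0" using fpos[OF t xy a] .
      have "f t y * h t x y x3 = g t x y * g t y x3" using fh[OF t xy a] .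
      then have "h t x y x3 = g t x y * g t y x3 / f t y" using fp by (simp add: field_simps)
      then show "h t x y x3 / g t x y = g t y x3 / f t y" using gp by simp
    qed simp
    also have "\<dots> = Out t y" by (simp add: Out_def sum_divide_distrib)
    finally show ?thesis .
  qed
  have "1 / g t x y * (- div_e ar (h t) x y) = In t x - Out t y"
    using e1 e2 by (simp add: div_e_def diff_divide_distrib)
  then show ?thesis using d by simp
qed

lemma vert_deriv:
  assumes t: "t \<in> {0..1}" and "ar x y" "ar y z"
  shows "((\<lambda>\<tau>. ln (f \<tau> y)) has_real_derivative (In t y - Out t y)) (at t within {0..1})"
proof -
  have fp: "f t y > 0" using fpos assms by blast
  have d: "((\<lambda>\<tau>. ln (f \<tau> y)) has_real_derivative (1 / f t y * (- div_v ar (g t) y))) (at t within {0..1})"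
    by (rule DERIV_chain'[OF fd[OF t]]) (rule DERIV_ln_divide[OF fp])
  have "1 / f t y * (- div_v ar (g t) y) = In t y - Out t y"
    by (simp add: div_v_def In_def Out_def diff_divide_distrib)
  then show ?thesis using d by simp
qed

lemma lnC_deriv:
  "opath ar \<gamma> \<Longrightarrow> length \<gamma> \<ge> 2 \<Longrightarrow> t \<in> {0..1} \<Longrightarrow>
   ((\<lambda>\<tau>. lnC (f \<tau>) (g \<tau>) \<gamma>) has_real_derivative (In t (hd \<gamma>) - Out t (last \<gamma>))) (at t within {0..1})"
proof (induction "f t" "g t" \<gamma> rule: lnC.induct)
  case (1 x y z r)
  have a: "ar x y" "ar y z" "opath ar (y # z # r)" using "1.prems" by auto
  have IH: "((\<lambda>\<tau>. lnC (f \<tau>) (g \<tau>) (y # z # r)) has_real_derivative (In t y - Out t (last (z # r)))) (at t within {0..1})"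
    using "1.hyps" a "1.prems" by simp
  have "((\<lambda>\<tau>. ln (g \<tau> x y) - ln (f \<tau> y) + lnC (f \<tau>) (g \<tau>) (y # z # r)) has_real_derivative
     ((In t x - Out t y) - (In t y - Out t y) + (In t y - Out t (last (z # r))))) (at t within {0..1})"
    by (intro DERIV_add DERIV_diff edge_deriv[OF "1.prems"(3) a(1)] vert_deriv[OF "1.prems"(3) a(1,2)] IH)
  then show ?case by simp
next
  case (2 x y)
  then show ?case using edge_deriv by simp
qed auto

lemma exp_lnC:
  "opath ar \<gamma> \<Longrightarrow> length \<gamma> \<ge> 2 \<Longrightarrow> t \<in> {0..1} \<Longrightarrow> exp (lnC (f t) (g t) \<gamma>) = ep (g t) \<gamma> / ip (f t) \<gamma>"
proof (induction "f t" "g t" \<gamma> rule: lnC.induct)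
  case (1 x y z r)
  have a: "ar x y" "ar y z" "opath ar (y # z # r)" using "1.prems" by auto
  have gp: "g t x y > 0" using gpos a "1.prems" by simp
  have fp: "f t y > 0" using fpos a "1.prems" by blast
  have "exp (lnC (f t) (g t) (x # y # z # r)) = g t x y / f t y * exp (lnC (f t) (g t) (y # z # r))"
    using gp fp by (simp add: exp_add exp_diff)
  also have "\<dots> = g t x y / f t y * (ep (g t) (y # z # r) / ip (f t) (y # z # r))"
    using "1.hyps" a "1.prems" by simp
  finally show ?case by simp
next
  case (2 x y)
  then show ?case using gpos by simp
qed auto

lemma extremal_const:
  assumes ex: "extremal ar \<gamma>" and t: "t \<in> {0..1}"
  shows "Cpath (f t) (g t) \<gamma> = Cpath (f 0) (g 0) \<gamma>"
proof -
  have op: "opath ar \<gamma>" and hA: "Eset ar (hd \<gamma>) = {}" and lB: "Fset ar (last \<gamma>) = {}"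
    using ex by (auto simp: extremal_def Aset_def Bset_def)
  have ne: "\<gamma> \<noteq> []" using op by auto
  show ?thesis
  proof (cases "length \<gamma> \<ge> 2")
    case True
    have "\<forall>s\<in>{0..1}. ((\<lambda>\<tau>. lnC (f \<tau>) (g \<tau>) \<gamma>) has_real_derivative 0) (at s within {0..1})"
    proof
      fix s :: real assume s: "s \<in> {0..1}"
      have "In s (hd \<gamma>) = 0" "Out s (last \<gamma>) = 0" using hA lB by (auto simp: In_def Out_def)
      then show "((\<lambda>\<tau>. lnC (f \<tau>) (g \<tau>) \<gamma>) has_real_derivative 0) (at s within {0..1})"
        using lnC_deriv[OF op True s] by simp
    qed
    then obtain c where c: "\<forall>s\<in>{0..1::real}. lnC (f s) (g s) \<gamma> = c"
      using has_field_derivative_zero_constant[of "{0..1::real}"] by blast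
    have "Cpath (f t) (g t) \<gamma> = exp (lnC (f t) (g t) \<gamma>)"
      using Cpath_eq[OF True] exp_lnC[OF op True t] by simp
    also have "\<dots> = exp (lnC (f 0) (g 0) \<gamma>)" using c t by simp
    also have "\<dots> = Cpath (f 0) (g 0) \<gamma>"
      using Cpath_eq[OF True] exp_lnC[OF op True, of 0] by simp
    finally show ?thesis .
  next
    case False
    then obtain x where x: "\<gamma> = [x]" using ne by (cases \<gamma>) (auto simp: numeral_2_eq_2 Suc_le_eq)
    have "\<forall>s\<in>{0..1}. ((\<lambda>\<tau>. f \<tau> x) has_real_derivative 0) (at s within {0..1})"
    proof
      fix s :: real assume s: "s \<in> {0..1}"
      have "div_v ar (g s) x = 0" using hA lB x by (simp add: div_v_def)
      then show "((\<lambda>\<tau>. f \<tau> x) has_real_derivative 0) (at s within {0..1})" using fd[OF s, of x] by simp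
    qed
    then obtain c where c: "\<forall>s\<in>{0..1::real}. f s x = c"
      using has_field_derivative_zero_constant[of "{0..1::real}"] by blast
    then show ?thesis using x t by simp
  qed
qed

end


lemma shift_sum: "(\<Sum>i<Suc m. F (if i < m then Suc i else 0)) = (\<Sum>i<Suc m. (F i :: 'a :: comm_monoid_add))"
proof -
  have "(\<Sum>i<Suc m. F (if i < m then Suc i else 0)) = (\<Sum>i<m. F (if i < m then Suc i else 0)) + F 0"
    by simp
  also have "(\<Sum>i<m. F (if i < m then Suc i else 0)) = (\<Sum>i<m. F (Suc i))" by (rule sum.cong) auto
  also have "(\<Sum>i<m. F (Suc i)) + F 0 = (\<Sum>i<Suc m. F i)" by (metis sum.lessThan_Suc_shift add.commute)
  finally show ?thesis .
qed

lemma sum_delta_pair: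
  assumes "finite S" "\<forall>i<n. q i \<in> S"
  shows "(\<Sum>p\<in>S. w p * (\<Sum>i<n. if p = q i then 1 else 0)) = (\<Sum>i<n. (w (q i) :: real))"
proof -
  have "(\<Sum>p\<in>S. w p * (\<Sum>i<n. if p = q i then 1 else 0)) = (\<Sum>p\<in>S. \<Sum>i<n. if p = q i then w p else 0)"
    by (simp add: sum_distrib_left if_distrib cong: if_cong)
  also have "\<dots> = (\<Sum>i<n. \<Sum>p\<in>S. if p = q i then w p else 0)" by (rule sum.swap)
  also have "\<dots> = (\<Sum>i<n. w (q i))" using assms by (intro sum.cong) (auto simp: sum.delta')
  finally show ?thesis .
qed

lemma tcost_alt: "tcost adj f0 f1 \<pi> = (\<Sum>p\<in>{x. f0 x \<noteq> 0} \<times> {y. f1 y \<noteq> 0}. real (gdist adj (fst p) (snd p)) * \<pi> (fst p) (snd p))"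
  unfolding tcost_def by (simp add: split_def)

lemma tcost_nonneg: "coupling f0 f1 \<pi> \<Longrightarrow> tcost adj f0 f1 \<pi> \<ge> 0"
  unfolding tcost_alt coupling_def by (intro sum_nonneg mult_nonneg_nonneg) auto

lemma W1_le: "coupling f0 f1 \<pi> \<Longrightarrow> W1 adj f0 f1 \<le> tcost adj f0 f1 \<pi>"
  unfolding W1_def
  by (rule cInf_lower) (auto intro!: bdd_belowI[of _ 0] tcost_nonneg)

lemma coupling_supp: "coupling f0 f1 \<pi> \<Longrightarrow> \<pi> a b \<noteq> 0 \<Longrightarrow> f0 a \<noteq> 0 \<and> f1 b \<noteq> 0"
  unfolding coupling_def by blast

lemma arrow_info:
  assumes "W1_arrow adj f0 f1 x y"
  shows "\<exists>a b \<pi>. \<pi> \<in> Pi1 adj f0 f1 \<and> \<pi> a b > 0 \<and>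
     gdist adj a x + 1 + gdist adj y b \<le> gdist adj a b"
proof -
  obtain \<gamma> k where g: "geodesic adj \<gamma>" "(hd \<gamma>, last \<gamma>) \<in> Cset adj f0 f1" "Suc k < length \<gamma>"
     "\<gamma> ! k = x" "\<gamma> ! Suc k = y"
    using assms unfolding W1_arrow_def by blast
  obtain \<pi> where "\<pi> \<in> Pi1 adj f0 f1" "\<pi> (hd \<gamma>) (last \<gamma>) > 0" using g(2) unfolding Cset_def by blast
  then show ?thesis using geodesic_split[OF g(1,3)] g(4,5) by blast
qed

locale ot =
  fixes adj :: "'v \<Rightarrow> 'v \<Rightarrow> bool" and f0 f1 :: "'v \<Rightarrow> real"
  assumes conn: "conn_locfin_graph adj" and P0: "fs_prob f0" and P1: "fs_prob f1"
begin

abbreviation "D \<equiv> gdist adj"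
abbreviation "S0 \<equiv> {x. f0 x \<noteq> 0}"
abbreviation "S1 \<equiv> {x. f1 x \<noteq> 0}"

lemma finS0: "finite S0" using P0 by (simp add: fs_prob_def)
lemma finS1: "finite S1" using P1 by (simp add: fs_prob_def)

lemma kp_nat:
  fixes A B :: "nat \<Rightarrow> 'v" and y :: "'v list"
  assumes n: "n = Suc m" and ly: "length y = Suc n"
    and h: "\<forall>i<n. D (A i) (y!i) + 1 + D (y!Suc i) (B i) \<le> D (A i) (B i)"
  shows "(\<Sum>i<n. D (A (if i < m then Suc i else 0)) (B i)) + n \<le> (\<Sum>i<n. D (A i) (B i)) + D (y!0) (y!n)"
proof -
  let ?s = "\<lambda>i. if i < m then Suc i else 0"
  have t: "\<And>i. i < n \<Longrightarrow> D (A (?s i)) (B i) \<le> D (A (?s i)) (y!(?s i)) + D (y!(?s i)) (y!Suc i) + D (y!Suc i) (B i)"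
    using gdist_tri[OF conn] by (meson add_le_mono le_refl order_trans)
  have "(\<Sum>i<n. D (A (?s i)) (B i)) \<le> (\<Sum>i<n. D (A (?s i)) (y!(?s i)) + D (y!(?s i)) (y!Suc i) + D (y!Suc i) (B i))"
    using t by (intro sum_mono) auto
  also have "\<dots> = (\<Sum>i<n. D (A (?s i)) (y!(?s i))) + (\<Sum>i<n. D (y!(?s i)) (y!Suc i)) + (\<Sum>i<n. D (y!Suc i) (B i))"
    by (simp add: sum.distrib)
  also have "(\<Sum>i<n. D (A (?s i)) (y!(?s i))) = (\<Sum>i<n. D (A i) (y!i))"
    unfolding n by (rule shift_sum)
  also have "(\<Sum>i<n. D (y!(?s i)) (y!Suc i)) = D (y!0) (y!n)"
    unfolding n by (simp add: sum.lessThan_Suc)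
  finally have 1: "(\<Sum>i<n. D (A (?s i)) (B i)) \<le> (\<Sum>i<n. D (A i) (y!i)) + D (y!0) (y!n) + (\<Sum>i<n. D (y!Suc i) (B i))" .
  have "(\<Sum>i<n. D (A i) (y!i) + 1 + D (y!Suc i) (B i)) \<le> (\<Sum>i<n. D (A i) (B i))"
    using h by (intro sum_mono) auto
  moreover have "(\<Sum>i<n. D (A i) (y!i) + 1 + D (y!Suc i) (B i)) = (\<Sum>i<n. D (A i) (y!i)) + n + (\<Sum>i<n. D (y!Suc i) (B i))"
    unfolding sum.distrib by simp
  ultimately have 2: "(\<Sum>i<n. D (A i) (y!i)) + n + (\<Sum>i<n. D (y!Suc i) (B i)) \<le> (\<Sum>i<n. D (A i) (B i))"
    by simp
  from 1 2 show ?thesis by linarith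
qed


lemma delta_y: "finite S \<Longrightarrow> b \<in> S \<Longrightarrow> (\<Sum>y\<in>S. if (x, y) = (a, b) then 1 else 0 :: real) = (if x = a then 1 else 0)"
  by (cases "x = a") (auto simp: sum.delta')

lemma delta_x: "finite S \<Longrightarrow> a \<in> S \<Longrightarrow> (\<Sum>x\<in>S. if (x, y) = (a, b) then 1 else 0 :: real) = (if y = b then 1 else 0)"
  by (cases "y = b") (auto simp: sum.delta')

lemma kp:
  assumes op: "opath (W1_arrow adj f0 f1) y" and ly: "length y = Suc n"
  shows "n \<le> D (hd y) (last y)"
proof (rule ccontr)
  assume "\<not> ?thesis"
  moreover have "hd y = y!0" using ly by (cases y) auto
  moreover have "last y = y!n" using ly by (cases y) (auto simp: last_conv_nth)
  ultimately have lt: "D (y!0) (y!n) < n" by simp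
  then obtain m where n: "n = Suc m" by (cases n) auto
  have "\<forall>i\<in>{..<n}. \<exists>p. snd (snd p) \<in> Pi1 adj f0 f1 \<and> snd (snd p) (fst p) (fst (snd p)) > 0 \<and>
          D (fst p) (y!i) + 1 + D (y!Suc i) (fst (snd p)) \<le> D (fst p) (fst (snd p))"
  proof
    fix i assume "i \<in> {..<n}"
    then have "Suc i < length y" using ly by simp
    from arrow_info[OF opath_nth[OF op this]] show "\<exists>p. snd (snd p) \<in> Pi1 adj f0 f1 \<and> snd (snd p) (fst p) (fst (snd p)) > 0 \<and>
          D (fst p) (y!i) + 1 + D (y!Suc i) (fst (snd p)) \<le> D (fst p) (fst (snd p))"
      by fastforce
  qed
  then have "\<exists>p. \<forall>i\<in>{..<n}. snd (snd (p i)) \<in> Pi1 adj f0 f1 \<and> snd (snd (p i)) (fst (p i)) (fst (snd (p i))) > 0 \<and>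
          D (fst (p i)) (y!i) + 1 + D (y!Suc i) (fst (snd (p i))) \<le> D (fst (p i)) (fst (snd (p i)))"
    by (rule bchoice)
  then obtain p where p: "\<forall>i\<in>{..<n}. snd (snd (p i)) \<in> Pi1 adj f0 f1 \<and> snd (snd (p i)) (fst (p i)) (fst (snd (p i))) > 0 \<and>
          D (fst (p i)) (y!i) + 1 + D (y!Suc i) (fst (snd (p i))) \<le> D (fst (p i)) (fst (snd (p i)))"
    by (rule exE)
  define A where "A i = fst (p i)" for i
  define B where "B i = fst (snd (p i))" for i
  define PP where "PP i = snd (snd (p i))" for i
  have p': "\<And>i. i < n \<Longrightarrow> PP i \<in> Pi1 adj f0 f1 \<and> PP i (A i) (B i) > 0 \<and>
        D (A i) (y!i) + 1 + D (y!Suc i) (B i) \<le> D (A i) (B i)"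
    unfolding A_def B_def PP_def using p by simp
  have hP: "\<And>i. i < n \<Longrightarrow> coupling f0 f1 (PP i) \<and> tcost adj f0 f1 (PP i) = W1 adj f0 f1"
    using p' unfolding Pi1_def by simp
  have hpos: "\<And>i. i < n \<Longrightarrow> PP i (A i) (B i) > 0" using p' by simp
  have hineq: "\<forall>i<n. D (A i) (y!i) + 1 + D (y!Suc i) (B i) \<le> D (A i) (B i)"
    using p' by simp
  have AS: "\<And>i. i < n \<Longrightarrow> A i \<in> S0 \<and> B i \<in> S1"
  proof -
    fix i assume i: "i < n"
    have "PP i (A i) (B i) \<noteq> 0" using hpos[OF i] by simp
    then show "A i \<in> S0 \<and> B i \<in> S1" using coupling_supp[of f0 f1 "PP i" "A i" "B i"] hP[OF i] by simp
  qed
  define \<pi> where "\<pi> x y = (\<Sum>i<n. PP i x y) / real n" for x y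
  have Pnn: "\<And>i x y. i < n \<Longrightarrow> PP i x y \<ge> 0"
  proof -
    fix i x y assume i: "i < n"
    have "coupling f0 f1 (PP i)" using hP[OF i] by simp
    then show "PP i x y \<ge> 0" unfolding coupling_def by simp
  qed
  have \<pi>nn: "\<And>x y. \<pi> x y \<ge> 0" unfolding \<pi>_def using Pnn by (intro divide_nonneg_nonneg sum_nonneg) auto
  have \<pi>supp: "\<And>x y. \<pi> x y \<noteq> 0 \<Longrightarrow> f0 x \<noteq> 0 \<and> f1 y \<noteq> 0"
  proof -
    fix x y assume "\<pi> x y \<noteq> 0"
    then have "(\<Sum>i<n. PP i x y) \<noteq> 0" by (auto simp: \<pi>_def)
    then have "\<exists>i\<in>{..<n}. PP i x y \<noteq> 0" using sum.neutral[of "{..<n}" "\<lambda>i. PP i x y"] by blast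
    then obtain i where i: "i < n" "PP i x y \<noteq> 0" by blast
    then show "f0 x \<noteq> 0 \<and> f1 y \<noteq> 0" using hP[OF i(1)] coupling_supp[of f0 f1 "PP i" x y] by simp
  qed
  have m1: "\<And>x. (\<Sum>y\<in>S1. \<pi> x y) = f0 x"
  proof -
    fix x
    have "(\<Sum>y\<in>S1. \<pi> x y) = (\<Sum>i<n. \<Sum>y\<in>S1. PP i x y) / real n"
      unfolding \<pi>_def sum_divide_distrib[symmetric] by (subst sum.swap) (rule refl)
    also have "\<dots> = (\<Sum>i<n. f0 x) / real n"
    proof -
      have "\<And>i. i < n \<Longrightarrow> (\<Sum>y\<in>S1. PP i x y) = f0 x" using hP unfolding coupling_def by blast
      then show ?thesis by simp
    qed
    finally show "(\<Sum>y\<in>S1. \<pi> x y) = f0 x" using n by simp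
  qed
  have m2: "\<And>y. (\<Sum>x\<in>S0. \<pi> x y) = f1 y"
  proof -
    fix y
    have "(\<Sum>x\<in>S0. \<pi> x y) = (\<Sum>i<n. \<Sum>x\<in>S0. PP i x y) / real n"
      unfolding \<pi>_def sum_divide_distrib[symmetric] by (subst sum.swap) (rule refl)
    also have "\<dots> = (\<Sum>i<n. f1 y) / real n"
    proof -
      have "\<And>i. i < n \<Longrightarrow> (\<Sum>x\<in>S0. PP i x y) = f1 y" using hP unfolding coupling_def by blast
      then show ?thesis by simp
    qed
    finally show "(\<Sum>x\<in>S0. \<pi> x y) = f1 y" using n by simp
  qed
  have \<pi>cost: "tcost adj f0 f1 \<pi> = W1 adj f0 f1"
  proof -
    have "tcost adj f0 f1 \<pi> = (\<Sum>q\<in>S0 \<times> S1. \<Sum>i<n. real (D (fst q) (snd q)) * PP i (fst q) (snd q)) / real n"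
      unfolding tcost_alt \<pi>_def sum_divide_distrib[symmetric] times_divide_eq_right sum_distrib_left ..
    also have "\<dots> = (\<Sum>i<n. tcost adj f0 f1 (PP i)) / real n"
      unfolding tcost_alt by (subst sum.swap) (rule refl)
    also have "\<dots> = (\<Sum>i<n. W1 adj f0 f1) / real n" using hP by simp
    finally show ?thesis using n by simp
  qed
  have \<pi>pos: "\<And>i. i < n \<Longrightarrow> \<pi> (A i) (B i) > 0"
  proof -
    fix i assume i: "i < n"
    have "PP i (A i) (B i) \<le> (\<Sum>j<n. PP j (A i) (B i))"
      using i Pnn by (intro member_le_sum) auto
    then have "(\<Sum>j<n. PP j (A i) (B i)) > 0" using hpos[OF i] by linarith
    then show "\<pi> (A i) (B i) > 0" using n by (simp add: \<pi>_def)
  qed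
  define mn where "mn = Min ((\<lambda>i. \<pi> (A i) (B i)) ` {..<n})"
  have mnpos: "mn > 0" unfolding mn_def using \<pi>pos n by (subst Min_gr_iff) auto
  have mnle: "\<And>i. i < n \<Longrightarrow> mn \<le> \<pi> (A i) (B i)" unfolding mn_def by (intro Min_le) auto
  define \<epsilon> where "\<epsilon> = mn / real n"
  have \<epsilon>pos: "\<epsilon> > 0" using mnpos n by (simp add: \<epsilon>_def)
  define s where "s i = (if i < m then Suc i else 0)" for i
  have sn: "\<And>i. i < n \<Longrightarrow> s i < n" using n by (auto simp: s_def)
  define Nc where "Nc q = (\<Sum>i<n. if q = (A (s i), B i) then 1 else 0 :: real)" for q
  define Oc where "Oc q = (\<Sum>i<n. if q = (A i, B i) then 1 else 0 :: real)" for q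
  define \<pi>' where "\<pi>' x y = \<pi> x y + \<epsilon> * (Nc (x, y) - Oc (x, y))" for x y
  have Ncnn: "\<And>q. Nc q \<ge> 0" unfolding Nc_def by (intro sum_nonneg) auto
  have Ocle: "\<And>q. Oc q \<le> real n"
  proof -
    fix q
    have "Oc q \<le> (\<Sum>i<n. 1 :: real)" unfolding Oc_def by (intro sum_mono) auto
    then show "Oc q \<le> real n" by simp
  qed
  have c1: "\<And>x y. 0 \<le> \<pi>' x y"
  proof -
    fix x y
    show "0 \<le> \<pi>' x y"
    proof (cases "\<exists>i<n. (x, y) = (A i, B i)")
      case True
      then obtain i where i: "i < n" "(x, y) = (A i, B i)" by blast
      have "mn \<le> \<pi> x y" using mnle[OF i(1)] i(2) by simp
      moreover have "\<epsilon> * Oc (x, y) \<le> \<epsilon> * real n" using Ocle \<epsilon>pos by (simp add: mult_left_mono)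
      moreover have "\<epsilon> * real n = mn" using n by (simp add: \<epsilon>_def)
      moreover have "\<epsilon> * Nc (x, y) \<ge> 0" using Ncnn \<epsilon>pos by simp
      moreover have "\<pi>' x y = \<pi> x y + \<epsilon> * Nc (x, y) - \<epsilon> * Oc (x, y)"
        unfolding \<pi>'_def by (simp add: right_diff_distrib)
      ultimately show ?thesis by linarith
    next
      case False
      then have "Oc (x, y) = 0" unfolding Oc_def by (intro sum.neutral) auto
      then show ?thesis unfolding \<pi>'_def using \<pi>nn[of x y] Ncnn[of "(x,y)"] \<epsilon>pos by simp
    qed
  qed
  have c2: "\<And>x y. \<pi>' x y \<noteq> 0 \<Longrightarrow> f0 x \<noteq> 0 \<and> f1 y \<noteq> 0"
  proof -
    fix x y assume ne: "\<pi>' x y \<noteq> 0"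
    show "f0 x \<noteq> 0 \<and> f1 y \<noteq> 0"
    proof (cases "\<pi> x y = 0")
      case False then show ?thesis using \<pi>supp by blast
    next
      case True
      then have "Nc (x, y) \<noteq> 0 \<or> Oc (x, y) \<noteq> 0" using ne unfolding \<pi>'_def by auto
      have "\<exists>i\<in>{..<n}. (x, y) = (A (s i), B i) \<or> (x, y) = (A i, B i)"
      proof (rule ccontr)
        assume c: "\<not> (\<exists>i\<in>{..<n}. (x, y) = (A (s i), B i) \<or> (x, y) = (A i, B i))"
        have "Nc (x, y) = 0" unfolding Nc_def using c by (intro sum.neutral) auto
        moreover have "Oc (x, y) = 0" unfolding Oc_def using c by (intro sum.neutral) auto
        ultimately show False using \<open>Nc (x, y) \<noteq> 0 \<or> Oc (x, y) \<noteq> 0\<close> by simp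
      qed
      then obtain i where i: "i < n" "(x, y) = (A (s i), B i) \<or> (x, y) = (A i, B i)" by blast
      then show ?thesis using AS[OF i(1)] AS[OF sn[OF i(1)]] by auto
    qed
  qed
  have c3: "\<And>x. (\<Sum>y\<in>S1. \<pi>' x y) = f0 x"
  proof -
    fix x
    have "(\<Sum>y\<in>S1. Nc (x, y)) = (\<Sum>i<n. \<Sum>y\<in>S1. if (x, y) = (A (s i), B i) then 1 else 0)"
      unfolding Nc_def by (rule sum.swap)
    also have "\<dots> = (\<Sum>i<n. if x = A (s i) then 1 else 0)"
      using AS finS1 by (intro sum.cong refl delta_y) auto
    also have "\<dots> = (\<Sum>i<n. if x = A i then 1 else 0)"
      unfolding n s_def by (rule shift_sum)
    also have "\<dots> = (\<Sum>i<n. \<Sum>y\<in>S1. if (x, y) = (A i, B i) then 1 else 0)"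
      using AS finS1 by (intro sum.cong refl delta_y[symmetric]) auto
    also have "\<dots> = (\<Sum>y\<in>S1. Oc (x, y))"
      unfolding Oc_def by (rule sum.swap)
    finally have e: "(\<Sum>y\<in>S1. Nc (x, y)) = (\<Sum>y\<in>S1. Oc (x, y))" .
    have "(\<Sum>y\<in>S1. \<pi>' x y) = (\<Sum>y\<in>S1. \<pi> x y) + \<epsilon> * ((\<Sum>y\<in>S1. Nc (x, y)) - (\<Sum>y\<in>S1. Oc (x, y)))"
      unfolding \<pi>'_def by (simp only: sum.distrib sum_distrib_left[symmetric] sum_subtractf)
    then show "(\<Sum>y\<in>S1. \<pi>' x y) = f0 x" using e m1 by simp
  qed
  have c4: "\<And>y. (\<Sum>x\<in>S0. \<pi>' x y) = f1 y"
  proof -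
    fix y
    have "(\<Sum>x\<in>S0. Nc (x, y)) = (\<Sum>i<n. \<Sum>x\<in>S0. if (x, y) = (A (s i), B i) then 1 else 0)"
      unfolding Nc_def by (rule sum.swap)
    also have "\<dots> = (\<Sum>i<n. if y = B i then 1 else 0)"
      using AS sn finS0 by (intro sum.cong refl delta_x) auto
    also have "\<dots> = (\<Sum>i<n. \<Sum>x\<in>S0. if (x, y) = (A i, B i) then 1 else 0)"
      using AS finS0 by (intro sum.cong refl delta_x[symmetric]) auto
    also have "\<dots> = (\<Sum>x\<in>S0. Oc (x, y))"
      unfolding Oc_def by (rule sum.swap)
    finally have e: "(\<Sum>x\<in>S0. Nc (x, y)) = (\<Sum>x\<in>S0. Oc (x, y))" .
    have "(\<Sum>x\<in>S0. \<pi>' x y) = (\<Sum>x\<in>S0. \<pi> x y) + \<epsilon> * ((\<Sum>x\<in>S0. Nc (x, y)) - (\<Sum>x\<in>S0. Oc (x, y)))"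
      unfolding \<pi>'_def by (simp only: sum.distrib sum_distrib_left[symmetric] sum_subtractf)
    then show "(\<Sum>x\<in>S0. \<pi>' x y) = f1 y" using e m2 by simp
  qed
  have cpl: "coupling f0 f1 \<pi>'" unfolding coupling_def using c1 c2 c3 c4 by blast
  let ?w = "\<lambda>q. real (D (fst q) (snd q))"
  have fin01: "finite (S0 \<times> S1)" using finS0 finS1 by simp
  have cN: "(\<Sum>q\<in>S0 \<times> S1. ?w q * Nc q) = (\<Sum>i<n. ?w (A (s i), B i))"
    unfolding Nc_def using AS sn by (intro sum_delta_pair[OF fin01]) auto
  have cO: "(\<Sum>q\<in>S0 \<times> S1. ?w q * Oc q) = (\<Sum>i<n. ?w (A i, B i))"
    unfolding Oc_def using AS by (intro sum_delta_pair[OF fin01]) auto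
  have "tcost adj f0 f1 \<pi>' = tcost adj f0 f1 \<pi> + \<epsilon> * ((\<Sum>q\<in>S0 \<times> S1. ?w q * Nc q) - (\<Sum>q\<in>S0 \<times> S1. ?w q * Oc q))"
  proof -
    have "tcost adj f0 f1 \<pi>' = (\<Sum>q\<in>S0 \<times> S1. ?w q * \<pi> (fst q) (snd q) + (\<epsilon> * (?w q * Nc q) - \<epsilon> * (?w q * Oc q)))"
      unfolding tcost_alt \<pi>'_def by (intro sum.cong refl) (simp add: algebra_simps)
    also have "\<dots> = tcost adj f0 f1 \<pi> + (\<epsilon> * (\<Sum>q\<in>S0 \<times> S1. ?w q * Nc q) - \<epsilon> * (\<Sum>q\<in>S0 \<times> S1. ?w q * Oc q))"
      unfolding tcost_alt by (simp only: sum.distrib sum_subtractf sum_distrib_left)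
    finally show ?thesis by (simp add: right_diff_distrib)
  qed
  also have "\<dots> = W1 adj f0 f1 + \<epsilon> * (real (\<Sum>i<n. D (A (s i)) (B i)) - real (\<Sum>i<n. D (A i) (B i)))"
    using cN cO \<pi>cost by simp
  finally have tc: "tcost adj f0 f1 \<pi>' = W1 adj f0 f1 + \<epsilon> * (real (\<Sum>i<n. D (A (s i)) (B i)) - real (\<Sum>i<n. D (A i) (B i)))" .
  have "(\<Sum>i<n. D (A (s i)) (B i)) + n \<le> (\<Sum>i<n. D (A i) (B i)) + D (y!0) (y!n)"
    unfolding s_def by (rule kp_nat[OF n ly hineq])
  then have "(\<Sum>i<n. D (A (s i)) (B i)) < (\<Sum>i<n. D (A i) (B i))" using lt by linarith
  then have "real (\<Sum>i<n. D (A (s i)) (B i)) - real (\<Sum>i<n. D (A i) (B i)) < 0" by linarith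
  then have "tcost adj f0 f1 \<pi>' < W1 adj f0 f1" using tc \<epsilon>pos by (simp add: mult_pos_neg)
  moreover have "W1 adj f0 f1 \<le> tcost adj f0 f1 \<pi>'" by (rule W1_le[OF cpl])
  ultimately show False by simp
qed

lemma arr_adj: "W1_arrow adj f0 f1 x y \<Longrightarrow> adj x y" by (simp add: W1_arrow_def)

lemma adj_irrefl: "\<not> adj x x" using conn by (simp add: conn_locfin_graph_def)

lemma op_distinct:
  assumes op: "opath (W1_arrow adj f0 f1) \<gamma>" shows "distinct \<gamma>"
  unfolding distinct_conv_nth
proof (intro allI impI)
  fix i j assume ij: "i < length \<gamma>" "j < length \<gamma>" "i \<noteq> j"
  show "\<gamma> ! i \<noteq> \<gamma> ! j"
  proof
    assume e: "\<gamma> ! i = \<gamma> ! j"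
    have "\<forall>i j. i < j \<longrightarrow> j < length \<gamma> \<longrightarrow> \<gamma>!i \<noteq> \<gamma>!j"
    proof (intro allI impI)
      fix i j assume "i < j" "j < length \<gamma>"
      from opath_seg[OF op less_imp_le[OF this(1)] this(2)] kp[of "drop i (take (Suc j) \<gamma>)" "j - i"]
      have "j - i \<le> D (\<gamma>!i) (\<gamma>!j)" by auto
      then show "\<gamma>!i \<noteq> \<gamma>!j" using \<open>i < j\<close> by auto
    qed
    then show False using ij e by (metis linorder_neqE_nat)
  qed
qed

lemma op_adjpos:
  assumes op: "opath (W1_arrow adj f0 f1) \<gamma>" and ij: "i \<le> j" "j < length \<gamma>"
    and a: "W1_arrow adj f0 f1 (\<gamma>!i) (\<gamma>!j)"
  shows "j = Suc i"
proof -
  have ad: "adj (\<gamma>!i) (\<gamma>!j)" using arr_adj[OF a] .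
  then have "i \<noteq> j" using adj_irrefl by auto
  from opath_seg[OF op ij] kp[of "drop i (take (Suc j) \<gamma>)" "j - i"]
  have "j - i \<le> D (\<gamma>!i) (\<gamma>!j)" by auto
  also have "\<dots> \<le> 1" using gdist_adj[of adj, OF ad] .
  finally show ?thesis using ij \<open>i \<noteq> j\<close> by linarith
qed

end

fun reach :: "('v \<Rightarrow> 'v \<Rightarrow> bool) \<Rightarrow> 'v \<Rightarrow> nat \<Rightarrow> 'v set" where
  "reach adj a 0 = {a}"
| "reach adj a (Suc r) = reach adj a r \<union> (\<Union>z\<in>reach adj a r. {y. adj z y})"

lemma reach_fin: "conn_locfin_graph adj \<Longrightarrow> finite (reach adj a r)"
  by (induction r) (auto simp: conn_locfin_graph_def)

lemma walk_reach: "opath adj w \<Longrightarrow> hd w = a \<Longrightarrow> length w \<le> Suc r \<Longrightarrow> last w \<in> reach adj a r"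
proof (induction r arbitrary: w)
  case 0
  then obtain x where "w = [x]" by (cases w) auto
  then show ?case using 0 by simp
next
  case (Suc r)
  show ?case
  proof (cases "length w \<le> Suc r")
    case True then show ?thesis using Suc by simp
  next
    case False
    then have lw: "length w = Suc (Suc r)" using Suc.prems by simp
    define u where "u = butlast w"
    have w: "w = u @ [last w]" using Suc.prems(1) unfolding u_def by (cases w rule: rev_cases) auto
    have une: "u \<noteq> []" using lw unfolding u_def by (cases w rule: rev_cases) auto
    have "opath adj u \<and> opath adj [last w] \<and> adj (last u) (hd [last w])"
      using opath_append[OF une, of "[last w]" adj] Suc.prems(1) w by simp
    then have ou: "opath adj u" and au: "adj (last u) (last w)" by auto
    have "hd u = a" using Suc.prems(2) une w by (metis hd_append2)
    moreover have "length u \<le> Suc r" using lw unfolding u_def by simp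
    ultimately have "last u \<in> reach adj a r" using Suc.IH ou by blast
    then show ?thesis using au by auto
  qed
qed

lemma ball_fin:
  assumes conn: "conn_locfin_graph adj" shows "finite {z. gdist adj a z \<le> r}"
proof (rule finite_subset[OF _ reach_fin[OF conn, of a r]])
  show "{z. gdist adj a z \<le> r} \<subseteq> reach adj a r"
  proof
    fix z assume "z \<in> {z. gdist adj a z \<le> r}"
    then have le: "gdist adj a z \<le> r" by simp
    obtain w where w: "walk adj w" "hd w = a" "last w = z" "length w = Suc (gdist adj a z)"
      using gdist_ex[OF conn] by blast
    show "z \<in> reach adj a r" using walk_reach[of adj w a r] w le by (simp add: walk_opath)
  qed
qed

context ot begin

lemma finV: "finite {x. \<exists>y. W1_arrow adj f0 f1 x y \<or> W1_arrow adj f0 f1 y x}"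
proof -
  let ?U = "\<Union>p\<in>S0 \<times> S1. {z. D (fst p) z \<le> D (fst p) (snd p)}"
  have fU: "finite ?U" using finS0 finS1 ball_fin[OF conn] by auto
  have "\<And>x y. W1_arrow adj f0 f1 x y \<Longrightarrow> x \<in> ?U \<and> y \<in> ?U"
  proof -
    fix x y assume a: "W1_arrow adj f0 f1 x y"
    obtain a b \<pi> where h: "\<pi> \<in> Pi1 adj f0 f1" "\<pi> a b > 0" "D a x + 1 + D y b \<le> D a b"
      using arrow_info[OF a] by blast
    have "coupling f0 f1 \<pi>" using h(1) by (simp add: Pi1_def)
    then have ab: "a \<in> S0" "b \<in> S1" using coupling_supp[of f0 f1 \<pi> a b] h(2) by auto
    have "D a y \<le> D a x + D x y" by (rule gdist_tri[OF conn])
    also have "\<dots> \<le> D a x + 1" using gdist_adj[of adj, OF arr_adj[OF a]] by simp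
    finally have "D a y \<le> D a b" using h(3) by linarith
    moreover have "D a x \<le> D a b" using h(3) by linarith
    ultimately show "x \<in> ?U \<and> y \<in> ?U" using ab by force
  qed
  then have "{x. \<exists>y. W1_arrow adj f0 f1 x y \<or> W1_arrow adj f0 f1 y x} \<subseteq> ?U" by blast
  then show ?thesis using fU finite_subset by blast
qed

end



locale comb =
  fixes ar :: "'v \<Rightarrow> 'v \<Rightarrow> bool" and F :: "'v \<Rightarrow> real" and G :: "'v \<Rightarrow> 'v \<Rightarrow> real"
  assumes finV: "finite {x. \<exists>y. ar x y \<or> ar y x}"
    and dist: "\<And>\<gamma>. opath ar \<gamma> \<Longrightarrow> distinct \<gamma>"
    and adjpos: "\<And>\<gamma> i j. opath ar \<gamma> \<Longrightarrow> i \<le> j \<Longrightarrow> j < length \<gamma> \<Longrightarrow> ar (\<gamma>!i) (\<gamma>!j) \<Longrightarrow> j = Suc i"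
    and Gpos: "\<And>x y. ar x y \<Longrightarrow> G x y > 0"
    and Fnn: "\<And>x. F x \<ge> 0"
    and Fpos: "\<And>x y z. ar x y \<Longrightarrow> ar y z \<Longrightarrow> F y > 0"
begin

abbreviation "V \<equiv> {x. \<exists>y. ar x y \<or> ar y x}"
abbreviation "C \<equiv> Cpath F G"

lemma long_in_V: assumes "opath ar \<gamma>" "length \<gamma> \<ge> 2" shows "set \<gamma> \<subseteq> V"
proof
  fix v assume "v \<in> set \<gamma>"
  then obtain i where i: "i < length \<gamma>" "\<gamma>!i = v" by (auto simp: in_set_conv_nth)
  show "v \<in> V"
  proof (cases "Suc i < length \<gamma>")
    case True then show ?thesis using opath_nth[OF assms(1) True] i by auto
  next
    case False
    then have "Suc (i - 1) < length \<gamma>" "Suc (i - 1) = i" using assms(2) i by auto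
    then show ?thesis using opath_nth[OF assms(1), of "i - 1"] i by auto
  qed
qed

lemma long_len: assumes "opath ar \<gamma>" "length \<gamma> \<ge> 2" shows "length \<gamma> \<le> card V"
proof -
  have "length \<gamma> = card (set \<gamma>)" using dist[OF assms(1)] by (simp add: distinct_card)
  also have "\<dots> \<le> card V" using long_in_V[OF assms] finV by (rule card_mono[rotated])
  finally show ?thesis .
qed

definition "Lset = {[x] | x. True} \<union> {\<gamma>. set \<gamma> \<subseteq> V \<and> length \<gamma> \<le> card V}"

lemma opath_in_Lset: "opath ar \<gamma> \<Longrightarrow> \<gamma> \<in> Lset"
proof (cases "length \<gamma> \<ge> 2")
  case True
  assume "opath ar \<gamma>" then show ?thesis using True long_in_V long_len by (auto simp: Lset_def)
next
  case False
  assume "opath ar \<gamma>"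
  then have "\<gamma> \<noteq> []" by auto
  then obtain x where "\<gamma> = [x]" using False by (cases \<gamma>) (auto simp: numeral_2_eq_2 Suc_le_eq)
  then show ?thesis by (auto simp: Lset_def)
qed

lemma fin_start: "finite {\<gamma>. opath ar \<gamma> \<and> hd \<gamma> = x}"
proof -
  have "{\<gamma>. opath ar \<gamma> \<and> hd \<gamma> = x} \<subseteq> {[x]} \<union> {\<gamma>. set \<gamma> \<subseteq> V \<and> length \<gamma> \<le> card V}"
    using opath_in_Lset by (fastforce simp: Lset_def)
  then show ?thesis using finite_lists_length_le[OF finV] finite_subset by blast
qed

lemma fin_end: "finite {\<gamma>. opath ar \<gamma> \<and> last \<gamma> = x}"
proof -
  have "{\<gamma>. opath ar \<gamma> \<and> last \<gamma> = x} \<subseteq> {[x]} \<union> {\<gamma>. set \<gamma> \<subseteq> V \<and> length \<gamma> \<le> card V}"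
    using opath_in_Lset by (fastforce simp: Lset_def)
  then show ?thesis using finite_lists_length_le[OF finV] finite_subset by blast
qed

lemma fin_SE1: "finite (SE1 ar x)"
  by (rule finite_subset[OF _ fin_end[of x]]) (auto simp: SE1_def)

lemma fin_SE2: "finite (SE2 ar x)"
  by (rule finite_subset[OF _ fin_start[of x]]) (auto simp: SE2_def)

lemma SE1_A: "x \<in> Aset ar \<Longrightarrow> SE1 ar x = {[x]}"
proof
  assume xA: "x \<in> Aset ar"
  show "SE1 ar x \<subseteq> {[x]}"
  proof
    fix \<gamma> assume "\<gamma> \<in> SE1 ar x"
    then have g: "opath ar \<gamma>" "last \<gamma> = x" by (auto simp: SE1_def)
    have "length \<gamma> = 1"
    proof (rule ccontr)
      assume "length \<gamma> \<noteq> 1"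
      then have "length \<gamma> \<ge> 2" using g(1) by (cases \<gamma>) (auto simp: Suc_le_eq)
      then have "ar (\<gamma>!(length \<gamma> - 2)) (\<gamma>!Suc (length \<gamma> - 2))" by (intro opath_nth[OF g(1)]) auto
      moreover have "Suc (length \<gamma> - 2) = length \<gamma> - 1" using \<open>length \<gamma> \<ge> 2\<close> by simp
      moreover have "\<gamma>!(length \<gamma> - 1) = x" using g \<open>length \<gamma> \<ge> 2\<close> by (metis last_conv_nth opath_Nil)
      ultimately have "ar (\<gamma>!(length \<gamma> - 2)) x" by simp
      then show False using xA by (auto simp: Aset_def Eset_def)
    qed
    then show "\<gamma> \<in> {[x]}" using g by (cases \<gamma>) auto
  qed
qed (auto simp: SE1_def)

lemma SE2_B: "x \<in> Bset ar \<Longrightarrow> SE2 ar x = {[x]}"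
proof
  assume xB: "x \<in> Bset ar"
  show "SE2 ar x \<subseteq> {[x]}"
  proof
    fix \<gamma> assume "\<gamma> \<in> SE2 ar x"
    then have g: "opath ar \<gamma>" "hd \<gamma> = x" by (auto simp: SE2_def)
    have "length \<gamma> = 1"
    proof (rule ccontr)
      assume "length \<gamma> \<noteq> 1"
      then have "length \<gamma> \<ge> 2" using g(1) by (cases \<gamma>) (auto simp: Suc_le_eq)
      then have "ar (\<gamma>!0) (\<gamma>!1)" using opath_nth[OF g(1), of 0] by simp
      then have "ar x (\<gamma>!1)" using g by (cases \<gamma>) auto
      then show False using xB by (auto simp: Bset_def Fset_def)
    qed
    then show "\<gamma> \<in> {[x]}" using g by (cases \<gamma>) auto
  qed
qed (auto simp: SE2_def)

lemma SE1_long: "x \<notin> Aset ar \<Longrightarrow> \<gamma> \<in> SE1 ar x \<Longrightarrow> length \<gamma> \<ge> 2"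
proof (rule ccontr)
  assume a: "x \<notin> Aset ar" "\<gamma> \<in> SE1 ar x" "\<not> length \<gamma> \<ge> 2"
  then have "opath ar \<gamma>" by (simp add: SE1_def)
  then obtain y where y: "\<gamma> = [y]" using a(3) by (cases \<gamma>) (auto simp: numeral_2_eq_2 Suc_le_eq)
  have "hd \<gamma> \<in> Aset ar" "last \<gamma> = x" using a(2) by (auto simp: SE1_def)
  then show False using a(1) y by simp
qed

lemma SE2_long: "x \<notin> Bset ar \<Longrightarrow> \<gamma> \<in> SE2 ar x \<Longrightarrow> length \<gamma> \<ge> 2"
proof (rule ccontr)
  assume a: "x \<notin> Bset ar" "\<gamma> \<in> SE2 ar x" "\<not> length \<gamma> \<ge> 2"
  then have "opath ar \<gamma>" by (simp add: SE2_def)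
  then obtain y where y: "\<gamma> = [y]" using a(3) by (cases \<gamma>) (auto simp: numeral_2_eq_2 Suc_le_eq)
  have "last \<gamma> \<in> Bset ar" "hd \<gamma> = x" using a(2) by (auto simp: SE2_def)
  then show False using a(1) y by simp
qed

lemma SE2_ne: "SE2 ar x \<noteq> {}"
proof (rule ccontr)
  assume "\<not> SE2 ar x \<noteq> {}"
  then have nb: "\<And>\<gamma>. opath ar \<gamma> \<Longrightarrow> hd \<gamma> = x \<Longrightarrow> last \<gamma> \<notin> Bset ar" by (auto simp: SE2_def)
  have "\<And>n. \<exists>\<gamma>. opath ar \<gamma> \<and> hd \<gamma> = x \<and> length \<gamma> = Suc n"
  proof -
    fix n show "\<exists>\<gamma>. opath ar \<gamma> \<and> hd \<gamma> = x \<and> length \<gamma> = Suc n"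
    proof (induction n)
      case 0 then show ?case by (intro exI[of _ "[x]"]) simp
    next
      case (Suc n)
      then obtain \<gamma> where g: "opath ar \<gamma>" "hd \<gamma> = x" "length \<gamma> = Suc n" by blast
      then obtain y where y: "ar (last \<gamma>) y" using nb[OF g(1,2)] by (auto simp: Bset_def Fset_def)
      have ne: "\<gamma> \<noteq> []" using g by auto
      have "opath ar (\<gamma> @ [y])" using opath_append[OF ne, of "[y]" ar] g y by simp
      then show ?case using g ne by (intro exI[of _ "\<gamma> @ [y]"]) simp
    qed
  qed
  then obtain \<gamma> where g: "opath ar \<gamma>" "length \<gamma> = Suc (Suc (card V))" by blast
  then show False using long_len[OF g(1)] by simp
qed

lemma SE1_ne: "SE1 ar x \<noteq> {}"
proof (rule ccontr)
  assume "\<not> SE1 ar x \<noteq> {}"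
  then have nb: "\<And>\<gamma>. opath ar \<gamma> \<Longrightarrow> last \<gamma> = x \<Longrightarrow> hd \<gamma> \<notin> Aset ar" by (auto simp: SE1_def)
  have "\<And>n. \<exists>\<gamma>. opath ar \<gamma> \<and> last \<gamma> = x \<and> length \<gamma> = Suc n"
  proof -
    fix n show "\<exists>\<gamma>. opath ar \<gamma> \<and> last \<gamma> = x \<and> length \<gamma> = Suc n"
    proof (induction n)
      case 0 then show ?case by (intro exI[of _ "[x]"]) simp
    next
      case (Suc n)
      then obtain \<gamma> where g: "opath ar \<gamma>" "last \<gamma> = x" "length \<gamma> = Suc n" by blast
      then obtain y where y: "ar y (hd \<gamma>)" using nb[OF g(1,2)] by (auto simp: Aset_def Eset_def)
      have ne: "\<gamma> \<noteq> []" using g by auto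
      have "opath ar ([y] @ \<gamma>)" using opath_append[of "[y]" \<gamma> ar] ne g y by simp
      then show ?case using g ne by (intro exI[of _ "y # \<gamma>"]) simp
    qed
  qed
  then obtain \<gamma> where g: "opath ar \<gamma>" "length \<gamma> = Suc (Suc (card V))" by blast
  then show False using long_len[OF g(1)] by simp
qed

lemma ep_pos': "opath ar \<gamma> \<Longrightarrow> ep G \<gamma> > 0" using ep_pos Gpos by blast
lemma ip_pos': "opath ar \<gamma> \<Longrightarrow> ip F \<gamma> > 0" using ip_pos Fpos by blast

lemma C_pos: "opath ar \<gamma> \<Longrightarrow> length \<gamma> \<ge> 2 \<Longrightarrow> C \<gamma> > 0"
  using Cpath_eq[of \<gamma> F G] ep_pos'[of \<gamma>] ip_pos'[of \<gamma>] by simp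

lemma C_nn: "opath ar \<gamma> \<Longrightarrow> C \<gamma> \<ge> 0"
proof (cases "length \<gamma> \<ge> 2")
  case True assume "opath ar \<gamma>" then show ?thesis using C_pos True by fastforce
next
  case False assume "opath ar \<gamma>"
  then obtain x where "\<gamma> = [x]" using False by (cases \<gamma>) (auto simp: numeral_2_eq_2 Suc_le_eq)
  then show ?thesis using Fnn by simp
qed

definition "\<alpha> x = (\<Sum>\<gamma>\<in>SE1 ar x. C \<gamma>)"
definition "\<beta> x = (\<Sum>\<gamma>\<in>SE2 ar x. C \<gamma>)"

lemma alpha_pos: "x \<notin> Aset ar \<Longrightarrow> \<alpha> x > 0"
  unfolding \<alpha>_def using fin_SE1 SE1_ne SE1_long C_pos
  by (intro sum_pos) (auto simp: SE1_def)

lemma beta_pos: "x \<notin> Bset ar \<Longrightarrow> \<beta> x > 0"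
  unfolding \<beta>_def using fin_SE2 SE2_ne SE2_long C_pos
  by (intro sum_pos) (auto simp: SE2_def)

lemma alpha_A: "x \<in> Aset ar \<Longrightarrow> \<alpha> x = F x" unfolding \<alpha>_def using SE1_A by simp
lemma beta_B: "x \<in> Bset ar \<Longrightarrow> \<beta> x = F x" unfolding \<beta>_def using SE2_B by simp

end


lemma butlast_join: "p \<noteq> [] \<Longrightarrow> last p = hd s \<Longrightarrow> s \<noteq> [] \<Longrightarrow> butlast p @ s = p @ tl s"
  by (metis append_butlast_last_id append_eq_append_conv2 hd_Cons_tl self_append_conv2 append_Cons append_Nil)

lemma last_join: "q \<noteq> [] \<Longrightarrow> last p = hd q \<Longrightarrow> p \<noteq> [] \<Longrightarrow> last (p @ tl q) = last q"
  by (cases q) auto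

context comb begin

definition "Tset \<sigma> = {\<gamma>. extremal ar \<gamma> \<and> (\<exists>k. k + length \<sigma> \<le> length \<gamma> \<and> take (length \<sigma>) (drop k \<gamma>) = \<sigma>)}"
definition "J \<sigma> p = butlast (fst p) @ \<sigma> @ tl (snd p)"

lemma J_alt:
  assumes "opath ar \<sigma>" "\<gamma>1 \<in> SE1 ar (hd \<sigma>)"
  shows "J \<sigma> (\<gamma>1, \<gamma>2) = (\<gamma>1 @ tl \<sigma>) @ tl \<gamma>2"
proof -
  have "\<gamma>1 \<noteq> []" "last \<gamma>1 = hd \<sigma>" "\<sigma> \<noteq> []" using assms by (auto simp: SE1_def)
  then show ?thesis unfolding J_def using butlast_join by (metis append.assoc fst_conv snd_conv)
qed

lemma J_in:
  assumes s: "opath ar \<sigma>" and g1: "\<gamma>1 \<in> SE1 ar (hd \<sigma>)" and g2: "\<gamma>2 \<in> SE2 ar (last \<sigma>)"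
  shows "J \<sigma> (\<gamma>1, \<gamma>2) \<in> Tset \<sigma>"
proof -
  have h1: "opath ar \<gamma>1" "hd \<gamma>1 \<in> Aset ar" "last \<gamma>1 = hd \<sigma>" "\<gamma>1 \<noteq> []" using g1 by (auto simp: SE1_def)
  have h2: "opath ar \<gamma>2" "last \<gamma>2 \<in> Bset ar" "hd \<gamma>2 = last \<sigma>" "\<gamma>2 \<noteq> []" using g2 by (auto simp: SE2_def)
  have sne: "\<sigma> \<noteq> []" using s by auto
  have o1: "opath ar (\<gamma>1 @ tl \<sigma>)" by (rule opath_join[OF h1(1) s h1(3)])
  have l1: "last (\<gamma>1 @ tl \<sigma>) = last \<sigma>" by (rule last_join[OF sne h1(3) h1(4)])
  have o2: "opath ar ((\<gamma>1 @ tl \<sigma>) @ tl \<gamma>2)" by (rule opath_join[OF o1 h2(1)]) (simp add: l1 h2(3))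
  have hd: "hd ((\<gamma>1 @ tl \<sigma>) @ tl \<gamma>2) = hd \<gamma>1" using h1(4) by simp
  have ls: "last ((\<gamma>1 @ tl \<sigma>) @ tl \<gamma>2) = last \<gamma>2" using last_join[OF h2(4), of "\<gamma>1 @ tl \<sigma>"] l1 h2(3) h1(4) by simp
  have ex: "extremal ar (J \<sigma> (\<gamma>1, \<gamma>2))" unfolding J_alt[OF s g1] extremal_def using o2 hd ls h1 h2 by simp
  have "take (length \<sigma>) (drop (length (butlast \<gamma>1)) (J \<sigma> (\<gamma>1, \<gamma>2))) = \<sigma>" by (simp add: J_def)
  moreover have "length (butlast \<gamma>1) + length \<sigma> \<le> length (J \<sigma> (\<gamma>1, \<gamma>2))" by (simp add: J_def)
  ultimately show ?thesis using ex unfolding Tset_def by blast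
qed

lemma T_sub:
  assumes s: "opath ar \<sigma>" and g: "\<gamma> \<in> Tset \<sigma>"
  shows "\<gamma> \<in> J \<sigma> ` (SE1 ar (hd \<sigma>) \<times> SE2 ar (last \<sigma>))"
proof -
  obtain k where k: "k + length \<sigma> \<le> length \<gamma>" "take (length \<sigma>) (drop k \<gamma>) = \<sigma>" and ex: "extremal ar \<gamma>"
    using g unfolding Tset_def by blast
  define l where "l = length \<sigma>"
  have l1: "l \<ge> 1" using s unfolding l_def by (cases \<sigma>) auto
  have op: "opath ar \<gamma>" "hd \<gamma> \<in> Aset ar" "last \<gamma> \<in> Bset ar" using ex by (auto simp: extremal_def)
  have nth: "\<And>i. i < l \<Longrightarrow> \<gamma>!(k + i) = \<sigma>!i"
  proof -
    fix i assume i: "i < l"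
    have "\<sigma>!i = (take l (drop k \<gamma>))!i" using k(2) l_def by simp
    also have "\<dots> = \<gamma>!(k + i)" using i k(1) l_def by simp
    finally show "\<gamma>!(k + i) = \<sigma>!i" by simp
  qed
  define \<gamma>1 where "\<gamma>1 = take (Suc k) \<gamma>"
  define \<gamma>2 where "\<gamma>2 = drop (k + l - 1) \<gamma>"
  have kl: "k < length \<gamma>" "k + l - 1 < length \<gamma>" using k(1) l1 l_def by auto
  have "hd \<sigma> = \<sigma>!0" using l1 l_def by (cases \<sigma>) auto
  then have hs: "\<gamma>!k = hd \<sigma>" using nth[of 0] l1 by simp
  have "\<sigma> \<noteq> []" using s by auto
  then have "last \<sigma> = \<sigma>!(l - 1)" using l_def by (simp add: last_conv_nth)
  then have ls: "\<gamma>!(k + l - 1) = last \<sigma>" using nth[of "l - 1"] l1 by simp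
  have "\<gamma>1 \<in> SE1 ar (hd \<sigma>)" unfolding SE1_def \<gamma>1_def
    using opath_take[OF op(1), of "Suc k"] op(2) kl(1) hs last_take_Suc[OF kl(1)] op(1)
    by (cases \<gamma>) auto
  moreover have "\<gamma>2 \<in> SE2 ar (last \<sigma>)" unfolding SE2_def \<gamma>2_def
    using opath_drop[OF op(1) kl(2)] op(3) kl(2) ls by (simp add: hd_drop_conv_nth)
  moreover have "J \<sigma> (\<gamma>1, \<gamma>2) = \<gamma>"
  proof -
    have "butlast \<gamma>1 = take k \<gamma>" unfolding \<gamma>1_def using kl(1) by (simp add: butlast_take)
    moreover have "tl \<gamma>2 = drop (k + l) \<gamma>" unfolding \<gamma>2_def using l1 by (simp add: drop_Suc[symmetric] tl_drop drop_Suc)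
    ultimately have "J \<sigma> (\<gamma>1, \<gamma>2) = take k \<gamma> @ \<sigma> @ drop (k + l) \<gamma>"
      unfolding J_def by simp
    also have "\<dots> = take k \<gamma> @ (take l (drop k \<gamma>) @ drop l (drop k \<gamma>))"
      using k(2) l_def by (simp add: add.commute)
    also have "\<dots> = \<gamma>" by (simp only: append_take_drop_id)
    finally show ?thesis .
  qed
  ultimately show ?thesis by force
qed

lemma T_eq: "opath ar \<sigma> \<Longrightarrow> Tset \<sigma> = J \<sigma> ` (SE1 ar (hd \<sigma>) \<times> SE2 ar (last \<sigma>))"
  using T_sub J_in by blast

lemma J_inj: assumes s: "opath ar \<sigma>" shows "inj_on (J \<sigma>) (SE1 ar (hd \<sigma>) \<times> SE2 ar (last \<sigma>))"
proof (rule inj_onI)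
  fix p p' assume p: "p \<in> SE1 ar (hd \<sigma>) \<times> SE2 ar (last \<sigma>)" and p': "p' \<in> SE1 ar (hd \<sigma>) \<times> SE2 ar (last \<sigma>)"
    and e: "J \<sigma> p = J \<sigma> p'"
  obtain \<gamma>1 \<gamma>2 where pp: "p = (\<gamma>1, \<gamma>2)" by (cases p)
  obtain \<gamma>1' \<gamma>2' where pp': "p' = (\<gamma>1', \<gamma>2')" by (cases p')
  have g1: "\<gamma>1 \<in> SE1 ar (hd \<sigma>)" "\<gamma>2 \<in> SE2 ar (last \<sigma>)" using p pp by auto
  have g1': "\<gamma>1' \<in> SE1 ar (hd \<sigma>)" "\<gamma>2' \<in> SE2 ar (last \<sigma>)" using p' pp' by auto
  define L where "L = J \<sigma> p"
  have "L \<in> Tset \<sigma>" using J_in[OF s g1] pp L_def by simp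
  then have dL: "distinct L" using dist by (auto simp: Tset_def extremal_def)
  have sne: "\<sigma> \<noteq> []" using s by auto
  have eqL: "J \<sigma> (\<gamma>1, \<gamma>2) = butlast \<gamma>1 @ hd \<sigma> # (tl \<sigma> @ tl \<gamma>2)" unfolding J_def using sne by simp
  have eqL': "J \<sigma> (\<gamma>1', \<gamma>2') = butlast \<gamma>1' @ hd \<sigma> # (tl \<sigma> @ tl \<gamma>2')" unfolding J_def using sne by simp
  have i1: "L ! length (butlast \<gamma>1) = hd \<sigma>" "length (butlast \<gamma>1) < length L"
    unfolding L_def pp eqL by (simp only: nth_append_length) simp
  have i2: "L ! length (butlast \<gamma>1') = hd \<sigma>" "length (butlast \<gamma>1') < length L"
    unfolding L_def e pp' eqL' by (simp only: nth_append_length) simp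
  have "length (butlast \<gamma>1) = length (butlast \<gamma>1')"
    using nth_eq_iff_index_eq[OF dL i1(2) i2(2)] i1(1) i2(1) by simp
  moreover have "butlast \<gamma>1 @ hd \<sigma> # (tl \<sigma> @ tl \<gamma>2) = butlast \<gamma>1' @ hd \<sigma> # (tl \<sigma> @ tl \<gamma>2')"
    using e eqL eqL' pp pp' by simp
  ultimately have bl: "butlast \<gamma>1 = butlast \<gamma>1'" and rest: "tl \<gamma>2 = tl \<gamma>2'"
    using append_eq_append_conv by auto
  have n1: "\<gamma>1 \<noteq> []" "\<gamma>1' \<noteq> []" "last \<gamma>1 = hd \<sigma>" "last \<gamma>1' = hd \<sigma>"
    using g1(1) g1'(1) by (auto simp: SE1_def)
  have "\<gamma>1 = \<gamma>1'"
    using append_butlast_last_id[OF n1(1)] append_butlast_last_id[OF n1(2)] bl n1(3,4) by metis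
  moreover have "\<gamma>2 = \<gamma>2'"
  proof -
    have "hd \<gamma>2 = hd \<gamma>2'" "\<gamma>2 \<noteq> []" "\<gamma>2' \<noteq> []" using g1(2) g1'(2) by (auto simp: SE2_def)
    then show ?thesis using rest by (metis list.collapse)
  qed
  ultimately show "p = p'" using pp pp' by simp
qed

lemma T_sum: "opath ar \<sigma> \<Longrightarrow>
   (\<Sum>\<gamma>\<in>Tset \<sigma>. H \<gamma>) = (\<Sum>\<gamma>1\<in>SE1 ar (hd \<sigma>). \<Sum>\<gamma>2\<in>SE2 ar (last \<sigma>). H (J \<sigma> (\<gamma>1, \<gamma>2)))"
  by (simp add: T_eq sum.reindex[OF J_inj] sum.cartesian_product)

definition "Lf \<gamma> = ep G \<gamma> / (ip F \<gamma> * (if length \<gamma> \<ge> 2 then F (last \<gamma>) else 1))"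
definition "Rf \<gamma> = ep G \<gamma> / (ip F \<gamma> * (if length \<gamma> \<ge> 2 then F (hd \<gamma>) else 1))"

lemma div_rearr: "(a * b * c) / ((d * e * f) * (g * h)) = (a / (d * e)) * (b / f) * (c / (g * h :: real))"
  by (simp add: divide_inverse inverse_mult_distrib ac_simps)

lemma C_J_long:
  assumes s: "opath ar \<sigma>" "length \<sigma> \<ge> 2" and g1: "\<gamma>1 \<in> SE1 ar (hd \<sigma>)" and g2: "\<gamma>2 \<in> SE2 ar (last \<sigma>)"
  shows "C (J \<sigma> (\<gamma>1, \<gamma>2)) = Lf \<gamma>1 * C \<sigma> * Rf \<gamma>2"
proof -
  have h1: "\<gamma>1 \<noteq> []" "last \<gamma>1 = hd \<sigma>" using g1 by (auto simp: SE1_def)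
  have h2: "\<gamma>2 \<noteq> []" "hd \<gamma>2 = last \<sigma>" using g2 by (auto simp: SE2_def)
  have sne: "\<sigma> \<noteq> []" using s by auto
  have tne: "tl \<sigma> \<noteq> []" using s(2) by (cases \<sigma>) auto
  have l1: "last (\<gamma>1 @ tl \<sigma>) = hd \<gamma>2" using last_join[OF sne h1(2) h1(1)] h2 by simp
  have ne1: "\<gamma>1 @ tl \<sigma> \<noteq> []" using h1 by simp
  have "length \<gamma>1 \<ge> 1" "length (tl \<sigma>) \<ge> 1" using h1(1) s(2) by (auto simp: Suc_le_eq)
  then have len1: "length (\<gamma>1 @ tl \<sigma>) \<ge> 2" by simp
  let ?L = "(\<gamma>1 @ tl \<sigma>) @ tl \<gamma>2"
  have ep: "ep G ?L = ep G \<gamma>1 * ep G \<sigma> * ep G \<gamma>2"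
    using ep_join[OF ne1 h2(1) l1] ep_join[OF h1(1) sne h1(2)] by simp
  have ip: "ip F ?L = (ip F \<gamma>1 * (if length \<gamma>1 \<ge> 2 then F (last \<gamma>1) else 1) * ip F \<sigma>) *
                      (ip F \<gamma>2 * (if length \<gamma>2 \<ge> 2 then F (hd \<gamma>2) else 1))"
    using ip_join[OF ne1 h2(1) l1, of F] ip_join[OF h1(1) sne h1(2), of F] len1 s(2) h1(2)
    by (simp add: ac_simps)
  have lenL: "length ?L \<ge> 2" using len1 by simp
  have "C (J \<sigma> (\<gamma>1, \<gamma>2)) = ep G ?L / ip F ?L" using J_alt[OF s(1) g1] Cpath_eq[OF lenL] by simp
  also have "\<dots> = Lf \<gamma>1 * (ep G \<sigma> / ip F \<sigma>) * Rf \<gamma>2"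
    unfolding ep ip Lf_def Rf_def by (rule div_rearr)
  also have "ep G \<sigma> / ip F \<sigma> = C \<sigma>" using Cpath_eq[OF s(2)] by simp
  finally show ?thesis .
qed

lemma C_J_R:
  assumes g1: "\<gamma>1 \<in> SE1 ar x" and g2: "\<gamma>2 \<in> SE2 ar x" and l2: "length \<gamma>2 \<ge> 2"
  shows "C (J [x] (\<gamma>1, \<gamma>2)) = Lf \<gamma>1 * C \<gamma>2"
proof -
  have h1: "\<gamma>1 \<noteq> []" "last \<gamma>1 = x" using g1 by (auto simp: SE1_def)
  have h2: "\<gamma>2 \<noteq> []" "hd \<gamma>2 = x" using g2 by (auto simp: SE2_def)
  have e: "J [x] (\<gamma>1, \<gamma>2) = \<gamma>1 @ tl \<gamma>2" using J_alt[of "[x]" \<gamma>1 \<gamma>2] g1 by simp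
  have l: "last \<gamma>1 = hd \<gamma>2" using h1 h2 by simp
  have "length \<gamma>1 \<ge> 1" "length (tl \<gamma>2) \<ge> 1" using h1(1) l2 by (auto simp: Suc_le_eq)
  then have lenL: "length (\<gamma>1 @ tl \<gamma>2) \<ge> 2" by simp
  have "C (J [x] (\<gamma>1, \<gamma>2)) = (ep G \<gamma>1 * 1 * ep G \<gamma>2) / ((ip F \<gamma>1 * (if length \<gamma>1 \<ge> 2 then F (last \<gamma>1) else 1) * 1) * (ip F \<gamma>2 * 1))"
    unfolding e Cpath_eq[OF lenL] ep_join[OF h1(1) h2(1) l] ip_join[OF h1(1) h2(1) l] using l2 l by (simp add: ac_simps)
  also have "\<dots> = Lf \<gamma>1 * (1 / 1) * (ep G \<gamma>2 / (ip F \<gamma>2 * 1))" unfolding Lf_def by (rule div_rearr)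
  also have "\<dots> = Lf \<gamma>1 * C \<gamma>2" using Cpath_eq[OF l2] by simp
  finally show ?thesis .
qed

lemma C_J_L:
  assumes g1: "\<gamma>1 \<in> SE1 ar x" and g2: "\<gamma>2 \<in> SE2 ar x" and l1: "length \<gamma>1 \<ge> 2"
  shows "C (J [x] (\<gamma>1, \<gamma>2)) = C \<gamma>1 * Rf \<gamma>2"
proof -
  have h1: "\<gamma>1 \<noteq> []" "last \<gamma>1 = x" using g1 by (auto simp: SE1_def)
  have h2: "\<gamma>2 \<noteq> []" "hd \<gamma>2 = x" using g2 by (auto simp: SE2_def)
  have e: "J [x] (\<gamma>1, \<gamma>2) = \<gamma>1 @ tl \<gamma>2" using J_alt[of "[x]" \<gamma>1 \<gamma>2] g1 by simp
  have l: "last \<gamma>1 = hd \<gamma>2" using h1 h2 by simp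
  have lenL: "length (\<gamma>1 @ tl \<gamma>2) \<ge> 2" using l1 by simp
  have "C (J [x] (\<gamma>1, \<gamma>2)) = (ep G \<gamma>1 * 1 * ep G \<gamma>2) / ((ip F \<gamma>1 * 1 * 1) * (ip F \<gamma>2 * (if length \<gamma>2 \<ge> 2 then F (hd \<gamma>2) else 1)))"
    unfolding e Cpath_eq[OF lenL] ep_join[OF h1(1) h2(1) l] ip_join[OF h1(1) h2(1) l] using l1 l by (simp add: ac_simps)
  also have "\<dots> = (ep G \<gamma>1 / (ip F \<gamma>1 * 1)) * (1 / 1) * Rf \<gamma>2" unfolding Rf_def by (rule div_rearr)
  also have "\<dots> = C \<gamma>1 * Rf \<gamma>2" using Cpath_eq[OF l1] by simp
  finally show ?thesis .
qed

end


lemma td: "k < length \<gamma> \<Longrightarrow> take (Suc n) (drop k \<gamma>) = \<gamma>!k # take n (drop (Suc k) \<gamma>)"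
  by (simp add: Cons_nth_drop_Suc[symmetric])

context comb begin

definition "Mset zs = {\<gamma>. extremal ar \<gamma> \<and>
              (\<exists>ks. length ks = length zs \<and> sorted ks \<and>
                    (\<forall>i<length zs. ks ! i < length \<gamma> \<and> \<gamma> ! (ks ! i) = zs ! i))}"

lemma mfun_eq: "mfun ar F G zs = (\<Sum>\<gamma>\<in>Mset zs. C \<gamma>)"
  unfolding mfun_def Mset_def ..

lemma Mset1: "Mset [x] = Tset [x]"
proof -
  have "Mset [x] = {\<gamma>. extremal ar \<gamma> \<and> (\<exists>k<length \<gamma>. \<gamma>!k = x)}"
  proof (intro set_eqI iffI)
    fix \<gamma> assume "\<gamma> \<in> Mset [x]"
    then obtain ks where "extremal ar \<gamma>" "length ks = 1" "ks!0 < length \<gamma>" "\<gamma>!(ks!0) = x"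
      unfolding Mset_def by auto
    then show "\<gamma> \<in> {\<gamma>. extremal ar \<gamma> \<and> (\<exists>k<length \<gamma>. \<gamma>!k = x)}" by blast
  next
    fix \<gamma> assume "\<gamma> \<in> {\<gamma>. extremal ar \<gamma> \<and> (\<exists>k<length \<gamma>. \<gamma>!k = x)}"
    then obtain k where "extremal ar \<gamma>" "k < length \<gamma>" "\<gamma>!k = x" by blast
    then show "\<gamma> \<in> Mset [x]" unfolding Mset_def by (intro CollectI conjI exI[of _ "[k]"]) auto
  qed
  also have "\<dots> = Tset [x]"
  proof (intro set_eqI iffI)
    fix \<gamma> assume "\<gamma> \<in> {\<gamma>. extremal ar \<gamma> \<and> (\<exists>k<length \<gamma>. \<gamma>!k = x)}"
    then obtain k where k: "extremal ar \<gamma>" "k < length \<gamma>" "\<gamma>!k = x" by blast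
    then have "take 1 (drop k \<gamma>) = [x]" using td[OF k(2), of 0] by simp
    then show "\<gamma> \<in> Tset [x]" unfolding Tset_def using k by (intro CollectI conjI exI[of _ k]) auto
  next
    fix \<gamma> assume "\<gamma> \<in> Tset [x]"
    then obtain k where k: "extremal ar \<gamma>" "k + 1 \<le> length \<gamma>" "take 1 (drop k \<gamma>) = [x]"
      unfolding Tset_def by auto
    then have "\<gamma>!k = x" using td[of k \<gamma> 0] by simp
    then show "\<gamma> \<in> {\<gamma>. extremal ar \<gamma> \<and> (\<exists>k<length \<gamma>. \<gamma>!k = x)}" using k
      by (intro CollectI conjI exI[of _ k]) auto
  qed
  finally show ?thesis .
qed

lemma Mset2: assumes a: "ar x0 x1" shows "Mset [x0, x1] = Tset [x0, x1]"
proof -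
  have "Mset [x0, x1] = {\<gamma>. extremal ar \<gamma> \<and> (\<exists>k. Suc k < length \<gamma> \<and> \<gamma>!k = x0 \<and> \<gamma>!Suc k = x1)}"
  proof (intro set_eqI iffI)
    fix \<gamma> assume "\<gamma> \<in> Mset [x0, x1]"
    then obtain ks where e: "extremal ar \<gamma>" and ks: "length ks = 2" "sorted ks"
       "\<forall>i<2. ks ! i < length \<gamma> \<and> \<gamma> ! (ks ! i) = [x0, x1] ! i"
      unfolding Mset_def by (auto simp: numeral_2_eq_2)
    obtain a b where ab: "ks = [a, b]" using ks(1) by (auto simp: numeral_2_eq_2 length_Suc_conv)
    have h: "a < length \<gamma>" "\<gamma>!a = x0" "b < length \<gamma>" "\<gamma>!b = x1" "a \<le> b"
      using ks(2) ks(3)[rule_format, of 0] ks(3)[rule_format, of 1] ab by auto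
    have op: "opath ar \<gamma>" using e by (simp add: extremal_def)
    have "b = Suc a" using adjpos[OF op h(5) h(3)] h a by simp
    then show "\<gamma> \<in> {\<gamma>. extremal ar \<gamma> \<and> (\<exists>k. Suc k < length \<gamma> \<and> \<gamma>!k = x0 \<and> \<gamma>!Suc k = x1)}"
      using e h by auto
  next
    fix \<gamma> assume "\<gamma> \<in> {\<gamma>. extremal ar \<gamma> \<and> (\<exists>k. Suc k < length \<gamma> \<and> \<gamma>!k = x0 \<and> \<gamma>!Suc k = x1)}"
    then obtain k where k: "extremal ar \<gamma>" "Suc k < length \<gamma>" "\<gamma>!k = x0" "\<gamma>!Suc k = x1" by blast
    have "\<forall>i<2. [k, Suc k] ! i < length \<gamma> \<and> \<gamma> ! ([k, Suc k] ! i) = [x0, x1] ! i"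
      using k by (auto simp: less_2_cases_iff)
    then show "\<gamma> \<in> Mset [x0, x1]" unfolding Mset_def using k(1)
      by (intro CollectI conjI exI[of _ "[k, Suc k]"]) auto
  qed
  also have "\<dots> = Tset [x0, x1]"
  proof (intro set_eqI iffI)
    fix \<gamma> assume "\<gamma> \<in> {\<gamma>. extremal ar \<gamma> \<and> (\<exists>k. Suc k < length \<gamma> \<and> \<gamma>!k = x0 \<and> \<gamma>!Suc k = x1)}"
    then obtain k where k: "extremal ar \<gamma>" "Suc k < length \<gamma>" "\<gamma>!k = x0" "\<gamma>!Suc k = x1" by blast
    then have "take 2 (drop k \<gamma>) = [x0, x1]"
      using td[of k \<gamma> 1] td[of "Suc k" \<gamma> 0] by (simp add: numeral_2_eq_2)
    then show "\<gamma> \<in> Tset [x0, x1]" unfolding Tset_def using k by (intro CollectI conjI exI[of _ k]) (auto simp: numeral_2_eq_2)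
  next
    fix \<gamma> assume "\<gamma> \<in> Tset [x0, x1]"
    then obtain k where k: "extremal ar \<gamma>" "k + length [x0, x1] \<le> length \<gamma>" "take (length [x0, x1]) (drop k \<gamma>) = [x0, x1]"
      unfolding Tset_def by blast
    then have "\<gamma>!k = x0 \<and> \<gamma>!Suc k = x1" using td[of k \<gamma> 1] td[of "Suc k" \<gamma> 0] by (simp add: numeral_2_eq_2)
    then show "\<gamma> \<in> {\<gamma>. extremal ar \<gamma> \<and> (\<exists>k. Suc k < length \<gamma> \<and> \<gamma>!k = x0 \<and> \<gamma>!Suc k = x1)}"
      using k by (intro CollectI conjI exI[of _ k]) auto
  qed
  finally show ?thesis .
qed

lemma Mset3: assumes a: "ar x0 x1" "ar x1 x2" shows "Mset [x0, x1, x2] = Tset [x0, x1, x2]"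
proof -
  have "Mset [x0, x1, x2] = {\<gamma>. extremal ar \<gamma> \<and> (\<exists>k. Suc (Suc k) < length \<gamma> \<and> \<gamma>!k = x0 \<and> \<gamma>!Suc k = x1 \<and> \<gamma>!Suc (Suc k) = x2)}"
  proof (intro set_eqI iffI)
    fix \<gamma> assume "\<gamma> \<in> Mset [x0, x1, x2]"
    then obtain ks where e: "extremal ar \<gamma>" and ks: "length ks = 3" "sorted ks"
       "\<forall>i<3. ks ! i < length \<gamma> \<and> \<gamma> ! (ks ! i) = [x0, x1, x2] ! i"
      unfolding Mset_def by (auto simp: numeral_3_eq_3)
    obtain a b c where ab: "ks = [a, b, c]" using ks(1) by (auto simp: numeral_3_eq_3 length_Suc_conv)
    have h: "a < length \<gamma>" "\<gamma>!a = x0" "b < length \<gamma>" "\<gamma>!b = x1" "c < length \<gamma>" "\<gamma>!c = x2" "a \<le> b" "b \<le> c"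
      using ks(2) ks(3)[rule_format, of 0] ks(3)[rule_format, of 1] ks(3)[rule_format, of 2] ab by auto
    have op: "opath ar \<gamma>" using e by (simp add: extremal_def)
    have "b = Suc a" using adjpos[OF op h(7) h(3)] h a by simp
    moreover have "c = Suc b" using adjpos[OF op h(8) h(5)] h a by simp
    ultimately show "\<gamma> \<in> {\<gamma>. extremal ar \<gamma> \<and> (\<exists>k. Suc (Suc k) < length \<gamma> \<and> \<gamma>!k = x0 \<and> \<gamma>!Suc k = x1 \<and> \<gamma>!Suc (Suc k) = x2)}"
      using e h by auto
  next
    fix \<gamma> assume "\<gamma> \<in> {\<gamma>. extremal ar \<gamma> \<and> (\<exists>k. Suc (Suc k) < length \<gamma> \<and> \<gamma>!k = x0 \<and> \<gamma>!Suc k = x1 \<and> \<gamma>!Suc (Suc k) = x2)}"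
    then obtain k where k: "extremal ar \<gamma>" "Suc (Suc k) < length \<gamma>" "\<gamma>!k = x0" "\<gamma>!Suc k = x1" "\<gamma>!Suc (Suc k) = x2" by blast
    have "\<forall>i<3. [k, Suc k, Suc (Suc k)] ! i < length \<gamma> \<and> \<gamma> ! ([k, Suc k, Suc (Suc k)] ! i) = [x0, x1, x2] ! i"
    proof (intro allI impI)
      fix i :: nat assume "i < 3"
      then have "i = 0 \<or> i = 1 \<or> i = 2" by auto
      then show "[k, Suc k, Suc (Suc k)] ! i < length \<gamma> \<and> \<gamma> ! ([k, Suc k, Suc (Suc k)] ! i) = [x0, x1, x2] ! i"
        using k by auto
    qed
    then show "\<gamma> \<in> Mset [x0, x1, x2]" unfolding Mset_def using k(1)
      by (intro CollectI conjI exI[of _ "[k, Suc k, Suc (Suc k)]"]) auto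
  qed
  also have "\<dots> = Tset [x0, x1, x2]"
  proof (intro set_eqI iffI)
    fix \<gamma> assume "\<gamma> \<in> {\<gamma>. extremal ar \<gamma> \<and> (\<exists>k. Suc (Suc k) < length \<gamma> \<and> \<gamma>!k = x0 \<and> \<gamma>!Suc k = x1 \<and> \<gamma>!Suc (Suc k) = x2)}"
    then obtain k where k: "extremal ar \<gamma>" "Suc (Suc k) < length \<gamma>" "\<gamma>!k = x0" "\<gamma>!Suc k = x1" "\<gamma>!Suc (Suc k) = x2" by blast
    then have "take 3 (drop k \<gamma>) = [x0, x1, x2]"
      using td[of k \<gamma> 2] td[of "Suc k" \<gamma> 1] td[of "Suc (Suc k)" \<gamma> 0] by (simp add: numeral_3_eq_3 numeral_2_eq_2)
    then show "\<gamma> \<in> Tset [x0, x1, x2]" unfolding Tset_def using k by (intro CollectI conjI exI[of _ k]) (auto simp: numeral_3_eq_3)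
  next
    fix \<gamma> assume "\<gamma> \<in> Tset [x0, x1, x2]"
    then obtain k where k: "extremal ar \<gamma>" "k + length [x0, x1, x2] \<le> length \<gamma>" "take (length [x0, x1, x2]) (drop k \<gamma>) = [x0, x1, x2]"
      unfolding Tset_def by blast
    then have "\<gamma>!k = x0 \<and> \<gamma>!Suc k = x1 \<and> \<gamma>!Suc (Suc k) = x2"
      using td[of k \<gamma> 2] td[of "Suc k" \<gamma> 1] td[of "Suc (Suc k)" \<gamma> 0] by (simp add: numeral_3_eq_3 numeral_2_eq_2)
    then show "\<gamma> \<in> {\<gamma>. extremal ar \<gamma> \<and> (\<exists>k. Suc (Suc k) < length \<gamma> \<and> \<gamma>!k = x0 \<and> \<gamma>!Suc k = x1 \<and> \<gamma>!Suc (Suc k) = x2)}"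
      using k by (intro CollectI conjI exI[of _ k]) auto
  qed
  finally show ?thesis .
qed

end


context comb begin

definition "Lam u = (\<Sum>\<gamma>\<in>SE1 ar u. Lf \<gamma>)"
definition "Rho u = (\<Sum>\<gamma>\<in>SE2 ar u. Rf \<gamma>)"

lemma Lam_A: "u \<in> Aset ar \<Longrightarrow> Lam u = 1"
  unfolding Lam_def using SE1_A by (simp add: Lf_def)

lemma Rho_B: "u \<in> Bset ar \<Longrightarrow> Rho u = 1"
  unfolding Rho_def using SE2_B by (simp add: Rf_def)

lemma F_pos_int: "u \<notin> Aset ar \<Longrightarrow> u \<notin> Bset ar \<Longrightarrow> F u > 0"
  using Fpos by (auto simp: Aset_def Bset_def Eset_def Fset_def)

lemma Lam_nA: assumes "u \<notin> Aset ar" shows "Lam u = \<alpha> u / F u"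
proof -
  have "Lam u = (\<Sum>\<gamma>\<in>SE1 ar u. C \<gamma> / F u)"
    unfolding Lam_def
  proof (rule sum.cong)
    fix \<gamma> assume g: "\<gamma> \<in> SE1 ar u"
    have l: "length \<gamma> \<ge> 2" using SE1_long[OF assms g] .
    have "last \<gamma> = u" using g by (simp add: SE1_def)
    then show "Lf \<gamma> = C \<gamma> / F u" using l by (simp add: Lf_def Cpath_eq)
  qed simp
  then show ?thesis by (simp add: \<alpha>_def sum_divide_distrib)
qed

lemma Rho_nB: assumes "u \<notin> Bset ar" shows "Rho u = \<beta> u / F u"
proof -
  have "Rho u = (\<Sum>\<gamma>\<in>SE2 ar u. C \<gamma> / F u)"
    unfolding Rho_def
  proof (rule sum.cong)
    fix \<gamma> assume g: "\<gamma> \<in> SE2 ar u"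
    have l: "length \<gamma> \<ge> 2" using SE2_long[OF assms g] .
    have "hd \<gamma> = u" using g by (simp add: SE2_def)
    then show "Rf \<gamma> = C \<gamma> / F u" using l by (simp add: Rf_def Cpath_eq)
  qed simp
  then show ?thesis by (simp add: \<beta>_def sum_divide_distrib)
qed

lemma Lam_pos: "u \<notin> Bset ar \<Longrightarrow> Lam u > 0"
  using Lam_A Lam_nA alpha_pos F_pos_int by (cases "u \<in> Aset ar") auto

lemma Rho_pos: "u \<notin> Aset ar \<Longrightarrow> Rho u > 0"
  using Rho_B Rho_nB beta_pos F_pos_int by (cases "u \<in> Bset ar") auto

abbreviation "m zs \<equiv> (\<Sum>\<gamma>\<in>Mset zs. C \<gamma>)"

lemma op1: "opath ar [x]" by simp

lemma m1_nB: assumes "x \<notin> Bset ar" shows "m [x] = Lam x * \<beta> x"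
proof -
  have "m [x] = (\<Sum>\<gamma>1\<in>SE1 ar x. \<Sum>\<gamma>2\<in>SE2 ar x. C (J [x] (\<gamma>1, \<gamma>2)))"
    using Mset1 T_sum[OF op1, of C x] by simp
  also have "\<dots> = (\<Sum>\<gamma>1\<in>SE1 ar x. \<Sum>\<gamma>2\<in>SE2 ar x. Lf \<gamma>1 * C \<gamma>2)"
    using C_J_R SE2_long[OF assms] by (intro sum.cong refl) auto
  also have "\<dots> = Lam x * \<beta> x" by (simp add: Lam_def \<beta>_def sum_product)
  finally show ?thesis .
qed

lemma m1_nA: assumes "x \<notin> Aset ar" shows "m [x] = \<alpha> x * Rho x"
proof -
  have "m [x] = (\<Sum>\<gamma>1\<in>SE1 ar x. \<Sum>\<gamma>2\<in>SE2 ar x. C (J [x] (\<gamma>1, \<gamma>2)))"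
    using Mset1 T_sum[OF op1, of C x] by simp
  also have "\<dots> = (\<Sum>\<gamma>1\<in>SE1 ar x. \<Sum>\<gamma>2\<in>SE2 ar x. C \<gamma>1 * Rf \<gamma>2)"
    using C_J_L SE1_long[OF assms] by (intro sum.cong refl) auto
  also have "\<dots> = \<alpha> x * Rho x" by (simp add: Rho_def \<alpha>_def sum_product)
  finally show ?thesis .
qed

lemma m1_AB: assumes "x \<in> Aset ar" "x \<in> Bset ar" shows "m [x] = F x"
proof -
  have "m [x] = (\<Sum>\<gamma>1\<in>SE1 ar x. \<Sum>\<gamma>2\<in>SE2 ar x. C (J [x] (\<gamma>1, \<gamma>2)))"
    using Mset1 T_sum[OF op1, of C x] by simp
  also have "\<dots> = F x" using SE1_A[OF assms(1)] SE2_B[OF assms(2)] by (simp add: J_def)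
  finally show ?thesis .
qed

lemma T1: "F x = m [x] * ((1 / m [x]) * \<beta> x) * ((1 / m [x]) * \<alpha> x)"
proof (cases "x \<in> Bset ar")
  case B: True
  show ?thesis
  proof (cases "x \<in> Aset ar")
    case True
    have "m [x] = F x" "\<alpha> x = F x" "\<beta> x = F x" using m1_AB True B alpha_A beta_B by auto
    then show ?thesis by (cases "F x = 0") auto
  next
    case False
    have "m [x] = \<alpha> x" "\<beta> x = F x" "\<alpha> x > 0" using m1_nA[OF False] Rho_B[OF B] beta_B[OF B] alpha_pos[OF False] by auto
    then show ?thesis by simp
  qed
next
  case nB: False
  show ?thesis
  proof (cases "x \<in> Aset ar")
    case True
    have "m [x] = \<beta> x" "\<alpha> x = F x" "\<beta> x > 0" using m1_nB[OF nB] Lam_A[OF True] alpha_A[OF True] beta_pos[OF nB] by auto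
    then show ?thesis by simp
  next
    case False
    have m: "m [x] = \<alpha> x / F x * \<beta> x" using m1_nB[OF nB] Lam_nA[OF False] by simp
    have p: "F x > 0" "\<alpha> x > 0" "\<beta> x > 0" using F_pos_int False nB alpha_pos beta_pos by auto
    show ?thesis unfolding m using p by (simp add: field_simps)
  qed
qed

lemma T_gen:
  assumes s: "opath ar \<sigma>" "length \<sigma> \<ge> 2"
  shows "(\<Sum>\<gamma>\<in>Tset \<sigma>. C \<gamma>) = Lam (hd \<sigma>) * C \<sigma> * Rho (last \<sigma>)"
proof -
  have "(\<Sum>\<gamma>\<in>Tset \<sigma>. C \<gamma>) = (\<Sum>\<gamma>1\<in>SE1 ar (hd \<sigma>). \<Sum>\<gamma>2\<in>SE2 ar (last \<sigma>). C (J \<sigma> (\<gamma>1, \<gamma>2)))"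
    using T_sum[OF s(1), of C] by simp
  also have "\<dots> = (\<Sum>\<gamma>1\<in>SE1 ar (hd \<sigma>). \<Sum>\<gamma>2\<in>SE2 ar (last \<sigma>). Lf \<gamma>1 * C \<sigma> * Rf \<gamma>2)"
    using C_J_long[OF s] by (intro sum.cong refl) auto
  also have "\<dots> = Lam (hd \<sigma>) * C \<sigma> * Rho (last \<sigma>)"
    by (simp add: Lam_def Rho_def sum_product sum_distrib_left sum_distrib_right ac_simps)
  finally show ?thesis .
qed

lemma T2: assumes a: "ar x0 x1"
  shows "G x0 x1 = m [x0, x1] * ((1 / m [x0]) * \<beta> x0) * ((1 / m [x1]) * \<alpha> x1)"
proof -
  have nB: "x0 \<notin> Bset ar" and nA: "x1 \<notin> Aset ar" using a by (auto simp: Aset_def Bset_def Eset_def Fset_def)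
  have s: "opath ar [x0, x1]" "length [x0, x1] \<ge> 2" using a by auto
  have m2: "m [x0, x1] = Lam x0 * G x0 x1 * Rho x1"
    using T_gen[OF s] Mset2[OF a] by (simp add: Cpath_def)
  have m0: "m [x0] = Lam x0 * \<beta> x0" by (rule m1_nB[OF nB])
  have m1: "m [x1] = \<alpha> x1 * Rho x1" by (rule m1_nA[OF nA])
  have p: "Lam x0 > 0" "\<beta> x0 > 0" "\<alpha> x1 > 0" "Rho x1 > 0"
    using Lam_pos[OF nB] beta_pos[OF nB] alpha_pos[OF nA] Rho_pos[OF nA] by auto
  show ?thesis unfolding m2 m0 m1 using p by (simp add: field_simps)
qed

lemma T3: assumes a: "ar x0 x1" "ar x1 x2"
  shows "G x0 x1 * G x1 x2 / F x1 = m [x0, x1, x2] * ((1 / m [x0]) * \<beta> x0) * ((1 / m [x2]) * \<alpha> x2)"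
proof -
  have nB: "x0 \<notin> Bset ar" and nA: "x2 \<notin> Aset ar" using a by (auto simp: Aset_def Bset_def Eset_def Fset_def)
  have s: "opath ar [x0, x1, x2]" "length [x0, x1, x2] \<ge> 2" using a by auto
  have c: "C [x0, x1, x2] = G x0 x1 * G x1 x2 / F x1"
    using Cpath_eq[OF s(2)] by simp
  have m2: "m [x0, x1, x2] = Lam x0 * (G x0 x1 * G x1 x2 / F x1) * Rho x2"
    using T_gen[OF s] Mset3[OF a] c by simp
  have m0: "m [x0] = Lam x0 * \<beta> x0" by (rule m1_nB[OF nB])
  have m1: "m [x2] = \<alpha> x2 * Rho x2" by (rule m1_nA[OF nA])
  have p: "Lam x0 > 0" "\<beta> x0 > 0" "\<alpha> x2 > 0" "Rho x2 > 0"
    using Lam_pos[OF nB] beta_pos[OF nB] alpha_pos[OF nA] Rho_pos[OF nA] by auto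
  show ?thesis unfolding m2 m0 m1 using p by (simp add: field_simps)
qed

end


theorem proposition3p12:
  fixes adj :: "'v \<Rightarrow> 'v \<Rightarrow> bool"
    and f :: "real \<Rightarrow> 'v \<Rightarrow> real"
    and g :: "real \<Rightarrow> 'v \<Rightarrow> 'v \<Rightarrow> real"
    and h :: "real \<Rightarrow> 'v \<Rightarrow> 'v \<Rightarrow> 'v \<Rightarrow> real"
  assumes "conn_locfin_graph adj"
    and "W1plus_geodesic adj f g h"
  shows "\<forall>t\<in>{0..1}.
    (let ar = W1_arrow adj (f 0) (f 1);
         m = mfun ar (f 0) (g 0);
         P = (\<lambda>x. (1 / m [x]) * (\<Sum>\<gamma>\<in>SE2 ar x. Cpath (f t) (g t) \<gamma>));
         Q = (\<lambda>x. (1 / m [x]) * (\<Sum>\<gamma>\<in>SE1 ar x. Cpath (f t) (g t) \<gamma>))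
     in (\<forall>x0. f t x0 = m [x0] * P x0 * Q x0) \<and>
        (\<forall>x0 x1. ar x0 x1 \<longrightarrow> g t x0 x1 = m [x0, x1] * P x0 * Q x1) \<and>
        (\<forall>x0 x1 x2. ar x0 x1 \<and> ar x1 x2 \<longrightarrow>
            h t x0 x1 x2 = m [x0, x1, x2] * P x0 * Q x2))"
proof
  fix t :: real assume t: "t \<in> {0..1}"
  define ar where "ar = W1_arrow adj (f 0) (f 1)"
  have W: "(\<forall>t\<in>{0..1}. fs_prob (f t)) \<and>
     (\<forall>s\<in>{0..1}. \<forall>t\<in>{0..1}. W1 adj (f s) (f t) = \<bar>t - s\<bar> * W1 adj (f 0) (f 1)) \<and>
     (\<forall>t\<in>{0..1}. \<forall>x. ((\<lambda>\<tau>. f \<tau> x) has_real_derivative (- div_v ar (g t) x)) (at t within {0..1})) \<and>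
     (\<forall>t\<in>{0..1}. \<forall>x y. ar x y \<longrightarrow>
        ((\<lambda>\<tau>. g \<tau> x y) has_real_derivative (- div_e ar (h t) x y)) (at t within {0..1})) \<and>
     (\<forall>t\<in>{0..1}. \<forall>x y. ar x y \<longrightarrow> g t x y > 0) \<and>
     (\<forall>t\<in>{0..1}. \<forall>x0 x1 x2. ar x0 x1 \<and> ar x1 x2 \<longrightarrow>
        f t x1 * h t x0 x1 x2 = g t x0 x1 * g t x1 x2)"
    using assms(2) unfolding W1plus_geodesic_def Let_def ar_def .
  have fsp0: "\<forall>t\<in>{0..1}. fs_prob (f t)" using W by (elim conjE) assumption
  have fd0: "\<forall>t\<in>{0..1}. \<forall>x. ((\<lambda>\<tau>. f \<tau> x) has_real_derivative (- div_v ar (g t) x)) (at t within {0..1})"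
    using W by (elim conjE) assumption
  have gd0: "\<forall>t\<in>{0..1}. \<forall>x y. ar x y \<longrightarrow>
        ((\<lambda>\<tau>. g \<tau> x y) has_real_derivative (- div_e ar (h t) x y)) (at t within {0..1})"
    using W by (elim conjE) assumption
  have gp0: "\<forall>t\<in>{0..1}. \<forall>x y. ar x y \<longrightarrow> g t x y > 0" using W by (elim conjE) assumption
  have fh0: "\<forall>t\<in>{0..1}. \<forall>x0 x1 x2. ar x0 x1 \<and> ar x1 x2 \<longrightarrow>
        f t x1 * h t x0 x1 x2 = g t x0 x1 * g t x1 x2" using W by (elim conjE) assumption
  have fsp: "\<And>s. s \<in> {0..1} \<Longrightarrow> fs_prob (f s)" using fsp0 by blast
  interpret geo ar f g h
  proof
    fix s x assume "s \<in> {0..1::real}" then show "f s x \<ge> 0" using fsp by (simp add: fs_prob_def)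
  next
    fix s x assume "s \<in> {0..1::real}"
    then show "((\<lambda>\<tau>. f \<tau> x) has_real_derivative (- div_v ar (g s) x)) (at s within {0..1})" using fd0 by blast
  next
    fix s x y assume "s \<in> {0..1::real}" "ar x y"
    then show "((\<lambda>\<tau>. g \<tau> x y) has_real_derivative (- div_e ar (h s) x y)) (at s within {0..1})" using gd0 by blast
  next
    fix s x y assume "s \<in> {0..1::real}" "ar x y"
    then show "g s x y > 0" using gp0 by blast
  next
    fix s x0 x1 x2 assume "s \<in> {0..1::real}" "ar x0 x1" "ar x1 x2"
    then show "f s x1 * h s x0 x1 x2 = g s x0 x1 * g s x1 x2" using fh0 by blast
  qed
  interpret ot adj "f 0" "f 1"
    by unfold_locales (use assms(1) fsp in auto)
  interpret c: comb ar "f t" "g t"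
  proof
    show "finite {x. \<exists>y. ar x y \<or> ar y x}" unfolding ar_def by (rule finV)
  next
    fix \<gamma> assume "opath ar \<gamma>" then show "distinct \<gamma>" unfolding ar_def by (rule op_distinct)
  next
    fix \<gamma> i j assume "opath ar \<gamma>" "i \<le> j" "j < length \<gamma>" "ar (\<gamma>!i) (\<gamma>!j)"
    then show "j = Suc i" unfolding ar_def by (rule op_adjpos)
  next
    fix x y assume "ar x y" then show "g t x y > 0" using gpos t by blast
  next
    fix x show "f t x \<ge> 0" using fnn t by blast
  next
    fix x y z assume "ar x y" "ar y z" then show "f t y > 0" using fpos t by blast
  qed
  have mm: "\<And>zs. mfun ar (f 0) (g 0) zs = c.m zs"
  proof -
    fix zs
    have "mfun ar (f 0) (g 0) zs = mfun ar (f t) (g t) zs"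
      unfolding mfun_def
    proof (rule sum.cong[OF refl])
      fix \<gamma> assume "\<gamma> \<in> {\<gamma>. extremal ar \<gamma> \<and>
              (\<exists>ks. length ks = length zs \<and> sorted ks \<and>
                    (\<forall>i<length zs. ks ! i < length \<gamma> \<and> \<gamma> ! (ks ! i) = zs ! i))}"
      then have "extremal ar \<gamma>" by blast
      then show "Cpath (f 0) (g 0) \<gamma> = Cpath (f t) (g t) \<gamma>" using extremal_const[OF _ t] by simp
    qed
    then show "mfun ar (f 0) (g 0) zs = c.m zs" by (simp add: c.mfun_eq)
  qed
  have b: "\<And>x. (\<Sum>\<gamma>\<in>SE2 ar x. Cpath (f t) (g t) \<gamma>) = c.\<beta> x" by (simp add: c.\<beta>_def)
  have a: "\<And>x. (\<Sum>\<gamma>\<in>SE1 ar x. Cpath (f t) (g t) \<gamma>) = c.\<alpha> x" by (simp add: c.\<alpha>_def)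
  have hh: "\<And>x0 x1 x2. ar x0 x1 \<Longrightarrow> ar x1 x2 \<Longrightarrow> h t x0 x1 x2 = g t x0 x1 * g t x1 x2 / f t x1"
  proof -
    fix x0 x1 x2 assume "ar x0 x1" "ar x1 x2"
    then have "f t x1 * h t x0 x1 x2 = g t x0 x1 * g t x1 x2" "f t x1 > 0" using fh fpos t by blast+
    then show "h t x0 x1 x2 = g t x0 x1 * g t x1 x2 / f t x1" by (simp add: field_simps)
  qed
  show "let ar = W1_arrow adj (f 0) (f 1);
         m = mfun ar (f 0) (g 0);
         P = (\<lambda>x. (1 / m [x]) * (\<Sum>\<gamma>\<in>SE2 ar x. Cpath (f t) (g t) \<gamma>));
         Q = (\<lambda>x. (1 / m [x]) * (\<Sum>\<gamma>\<in>SE1 ar x. Cpath (f t) (g t) \<gamma>))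
     in (\<forall>x0. f t x0 = m [x0] * P x0 * Q x0) \<and>
        (\<forall>x0 x1. ar x0 x1 \<longrightarrow> g t x0 x1 = m [x0, x1] * P x0 * Q x1) \<and>
        (\<forall>x0 x1 x2. ar x0 x1 \<and> ar x1 x2 \<longrightarrow>
            h t x0 x1 x2 = m [x0, x1, x2] * P x0 * Q x2)"
    unfolding Let_def ar_def[symmetric] mm a b
  proof (intro conjI allI impI)
    fix x0 show "f t x0 = c.m [x0] * (1 / c.m [x0] * c.\<beta> x0) * (1 / c.m [x0] * c.\<alpha> x0)" by (rule c.T1)
  next
    fix x0 x1 assume "ar x0 x1"
    then show "g t x0 x1 = c.m [x0, x1] * (1 / c.m [x0] * c.\<beta> x0) * (1 / c.m [x1] * c.\<alpha> x1)" by (rule c.T2)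
  next
    fix x0 x1 x2 assume "ar x0 x1 \<and> ar x1 x2"
    then show "h t x0 x1 x2 = c.m [x0, x1, x2] * (1 / c.m [x0] * c.\<beta> x0) * (1 / c.m [x2] * c.\<alpha> x2)"
      using c.T3 hh by simp
  qed
qed


end
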